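(* For every positive integer $t$, $M(t)=SM(t)$ and $OM(t)\leq M(t)\leq OM(2t)$.
   Context: A signed graph $(G,\sigma)$ is a graph (loops and parallel edges allowed) with a signature $\sigma:E(G)\to\{+,-\}$. Switching at a vertex multiplies the signs of all incident edges by $-$. A signed graph $(H,\pi)$ is a minor of $(G,\sigma)$ if it is obtained by a sequence of vertex deletions, edge deletions, contractions of positive edges, and switchings. A signed graph is balanced if it has no negative cycle (sign of a cycle = product of its edge signs); a vertex set is balanced if it induces a balanced subgraph. A balanced $k$-coloring is a partition (or cover) of the vertex set into $k$ balanced sets, and the balanced chromatic number $\chi_b(\hat G)$ is the minimum such $k$ (finite iff $\hat G$ has no negative loop). For a graph $G$, $\tilde G$ denotes the signed graph obtained by replacing every edge with a positive and a negative parallel edge, and $(G,-)$ denotes $G$ with all edges negative. $M(t)$ is the largest $k$ such that every graph of chromatic number at least $t$ contains $K_k$ as a minor. $SM(t)$ is the largest $k$ such that every signed graph with no negative loop and $\chi_b\geq t$ contains $\tilde K_k$ as a minor. $OM(t)$ is the largest $k$ such that for every graph $G$ with $\chi(G)\geq t$, the signed graph $(G,-)$ contains $(K_k,-)$ as a minor. *)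

theory Defs
  imports Main
begin

text \<open>A multigraph: vertex set, edge set, and for each edge the set of its ends
(one end for a loop, two ends otherwise).  A signed graph additionally has a
signature; sign e = True means e is positive, False means negative.\<close>

record ('v,'e) mgraph =
  verts :: "'v set"
  edges :: "'e set"
  ends  :: "'e \<Rightarrow> 'v set"

record ('v,'e) sgraph = "('v,'e) mgraph" +
  sign :: "'e \<Rightarrow> bool"

definition wf_graph :: "('v,'e,'x) mgraph_scheme \<Rightarrow> bool" where
  "wf_graph G \<longleftrightarrow> finite (verts G) \<and> finite (edges G) \<and>
     (\<forall>e\<in>edges G. ends G e \<subseteq> verts G \<and> card (ends G e) \<in> {1,2})"

definition is_loop :: "('v,'e,'x) mgraph_scheme \<Rightarrow> 'e \<Rightarrow> bool" where
  "is_loop G e \<longleftrightarrow> card (ends G e) = 1"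

definition loopless :: "('v,'e,'x) mgraph_scheme \<Rightarrow> bool" where
  "loopless G \<longleftrightarrow> (\<forall>e\<in>edges G. \<not> is_loop G e)"

definition neg_loop :: "('v,'e,'x) sgraph_scheme \<Rightarrow> bool" where
  "neg_loop G \<longleftrightarrow> (\<exists>e\<in>edges G. is_loop G e \<and> \<not> sign G e)"

definition del_vertex :: "('v,'e,'x) mgraph_scheme \<Rightarrow> 'v \<Rightarrow> ('v,'e,'x) mgraph_scheme" where
  "del_vertex G v = G\<lparr>verts := verts G - {v}, edges := {e \<in> edges G. v \<notin> ends G e}\<rparr>"

definition del_edge :: "('v,'e,'x) mgraph_scheme \<Rightarrow> 'e \<Rightarrow> ('v,'e,'x) mgraph_scheme" where
  "del_edge G e = G\<lparr>edges := edges G - {e}\<rparr>"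

definition contract :: "('v,'e,'x) mgraph_scheme \<Rightarrow> 'e \<Rightarrow> 'v \<Rightarrow> 'v \<Rightarrow> ('v,'e,'x) mgraph_scheme" where
  "contract G e u w = G\<lparr>verts := verts G - {w}, edges := edges G - {e},
      ends := (\<lambda>f. (\<lambda>x. if x = w then u else x) ` ends G f)\<rparr>"

text \<open>Switching at v negates the sign of every non-loop edge incident with v
(a loop is incident twice with its vertex, so its sign is unchanged).\<close>
definition switch :: "('v,'e,'x) sgraph_scheme \<Rightarrow> 'v \<Rightarrow> ('v,'e,'x) sgraph_scheme" where
  "switch G v = G\<lparr>sign := (\<lambda>f. if v \<in> ends G f \<and> \<not> is_loop G f then \<not> sign G f else sign G f)\<rparr>"

inductive minor_step :: "('v,'e) mgraph \<Rightarrow> ('v,'e) mgraph \<Rightarrow> bool" where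
  "v \<in> verts G \<Longrightarrow> minor_step (del_vertex G v) G"
| "e \<in> edges G \<Longrightarrow> minor_step (del_edge G e) G"
| "e \<in> edges G \<Longrightarrow> ends G e = {u, w} \<Longrightarrow> u \<noteq> w \<Longrightarrow> minor_step (contract G e u w) G"

definition is_minor :: "('v,'e) mgraph \<Rightarrow> ('v,'e) mgraph \<Rightarrow> bool" where
  "is_minor H G \<longleftrightarrow> minor_step\<^sup>*\<^sup>* H G"

inductive sminor_step :: "('v,'e) sgraph \<Rightarrow> ('v,'e) sgraph \<Rightarrow> bool" where
  "v \<in> verts G \<Longrightarrow> sminor_step (del_vertex G v) G"
| "e \<in> edges G \<Longrightarrow> sminor_step (del_edge G e) G"
| "e \<in> edges G \<Longrightarrow> sign G e \<Longrightarrow> ends G e = {u, w} \<Longrightarrow> u \<noteq> w \<Longrightarrow>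
     sminor_step (contract G e u w) G"
| "v \<in> verts G \<Longrightarrow> sminor_step (switch G v) G"

definition is_sminor :: "('v,'e) sgraph \<Rightarrow> ('v,'e) sgraph \<Rightarrow> bool" where
  "is_sminor H G \<longleftrightarrow> sminor_step\<^sup>*\<^sup>* H G"

text \<open>A cycle of length n \<ge> 1: distinct vertices vs!0,...,vs!(n-1) and distinct edges
es!i joining vs!i and vs!((i+1) mod n) (n = 1: a loop; n = 2: two parallel edges).\<close>
definition is_cycle :: "('v,'e,'x) mgraph_scheme \<Rightarrow> 'v list \<Rightarrow> 'e list \<Rightarrow> bool" where
  "is_cycle G vs es \<longleftrightarrow> vs \<noteq> [] \<and> length es = length vs \<and> distinct vs \<and> distinct es \<and>
     set es \<subseteq> edges G \<and>
     (\<forall>i<length es. ends G (es ! i) = {vs ! i, vs ! ((i + 1) mod length vs)})"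

definition negative_cycle :: "('v,'e,'x) sgraph_scheme \<Rightarrow> 'v list \<Rightarrow> 'e list \<Rightarrow> bool" where
  "negative_cycle G vs es \<longleftrightarrow> is_cycle G vs es \<and> odd (length (filter (\<lambda>e. \<not> sign G e) es))"

definition balanced_set :: "('v,'e,'x) sgraph_scheme \<Rightarrow> 'v set \<Rightarrow> bool" where
  "balanced_set G S \<longleftrightarrow> \<not> (\<exists>vs es. negative_cycle G vs es \<and> set vs \<subseteq> S)"

definition balanced_colorable :: "('v,'e,'x) sgraph_scheme \<Rightarrow> nat \<Rightarrow> bool" where
  "balanced_colorable G k \<longleftrightarrow> (\<exists>c :: 'v \<Rightarrow> nat. (\<forall>v\<in>verts G. c v < k) \<and>
      (\<forall>i<k. balanced_set G {v \<in> verts G. c v = i}))"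

definition chi_b :: "('v,'e,'x) sgraph_scheme \<Rightarrow> nat" where
  "chi_b G = (LEAST k. balanced_colorable G k)"

definition colorable :: "('v,'e,'x) mgraph_scheme \<Rightarrow> nat \<Rightarrow> bool" where
  "colorable G k \<longleftrightarrow> (\<exists>c :: 'v \<Rightarrow> nat. (\<forall>v\<in>verts G. c v < k) \<and>
      (\<forall>e\<in>edges G. \<forall>u\<in>ends G e. \<forall>w\<in>ends G e. u \<noteq> w \<longrightarrow> c u \<noteq> c w))"

definition chi :: "('v,'e,'x) mgraph_scheme \<Rightarrow> nat" where
  "chi G = (LEAST k. colorable G k)"

definition is_K :: "('v,'e,'x) mgraph_scheme \<Rightarrow> nat \<Rightarrow> bool" where
  "is_K G k \<longleftrightarrow> wf_graph G \<and> loopless G \<and> card (verts G) = k \<and>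
     (\<forall>u\<in>verts G. \<forall>w\<in>verts G. u \<noteq> w \<longrightarrow> card {e \<in> edges G. ends G e = {u, w}} = 1)"

definition is_tildeK :: "('v,'e,'x) sgraph_scheme \<Rightarrow> nat \<Rightarrow> bool" where
  "is_tildeK G k \<longleftrightarrow> wf_graph G \<and> loopless G \<and> card (verts G) = k \<and>
     (\<forall>u\<in>verts G. \<forall>w\<in>verts G. u \<noteq> w \<longrightarrow>
        card {e \<in> edges G. ends G e = {u, w} \<and> sign G e} = 1 \<and>
        card {e \<in> edges G. ends G e = {u, w} \<and> \<not> sign G e} = 1)"

definition is_negK :: "('v,'e,'x) sgraph_scheme \<Rightarrow> nat \<Rightarrow> bool" where
  "is_negK G k \<longleftrightarrow> is_K G k \<and> (\<forall>e\<in>edges G. \<not> sign G e)"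

definition neg_of :: "('v,'e) mgraph \<Rightarrow> ('v,'e) sgraph" where
  "neg_of G = \<lparr>verts = verts G, edges = edges G, ends = ends G, sign = (\<lambda>_. False)\<rparr>"

text \<open>Graphs are finite; every finite (signed) multigraph is isomorphic to one with
vertices and edges labelled by natural numbers, so we quantify over those.\<close>

type_synonym graph = "(nat, nat) mgraph"
type_synonym sgraph_nat = "(nat, nat) sgraph"

definition M :: "nat \<Rightarrow> nat" where
  "M t = (GREATEST k. \<forall>G :: graph. wf_graph G \<and> loopless G \<and> chi G \<ge> t \<longrightarrow>
            (\<exists>H. is_minor H G \<and> is_K H k))"

definition SM :: "nat \<Rightarrow> nat" where
  "SM t = (GREATEST k. \<forall>G :: sgraph_nat. wf_graph G \<and> \<not> neg_loop G \<and> chi_b G \<ge> t \<longrightarrow>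
            (\<exists>H. is_sminor H G \<and> is_tildeK H k))"

definition OM :: "nat \<Rightarrow> nat" where
  "OM t = (GREATEST k. \<forall>G :: graph. wf_graph G \<and> loopless G \<and> chi G \<ge> t \<longrightarrow>
            (\<exists>H. is_sminor H (neg_of G) \<and> is_negK H k))"

end

theory Submission
  imports Defs
begin


definition forget :: "('v,'e) sgraph \<Rightarrow> ('v,'e) mgraph" where
  "forget S = \<lparr>verts = verts S, edges = edges S, ends = ends S\<rparr>"

definition pos_of :: "('v,'e) mgraph \<Rightarrow> ('v,'e) sgraph" where
  "pos_of G = \<lparr>verts = verts G, edges = edges G, ends = ends G, sign = (\<lambda>_. True)\<rparr>"

lemma forget_simps[simp]: "verts (forget S) = verts S" "edges (forget S) = edges S"
  "ends (forget S) = ends S"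
  by (simp_all add: forget_def)

lemma forget_neg_of[simp]: "forget (neg_of G) = G"
  by (cases G) (simp add: forget_def neg_of_def)

lemma forget_pos_of[simp]: "forget (pos_of G) = G"
  by (cases G) (simp add: forget_def pos_of_def)

lemma pos_of_simps[simp]: "verts (pos_of G) = verts G" "edges (pos_of G) = edges G"
  "ends (pos_of G) = ends G" "sign (pos_of G) = (\<lambda>_. True)"
  by (simp_all add: pos_of_def)

lemma neg_of_simps[simp]: "verts (neg_of G) = verts G" "edges (neg_of G) = edges G"
  "ends (neg_of G) = ends G" "sign (neg_of G) = (\<lambda>_. False)"
  by (simp_all add: neg_of_def)

lemma del_vertex_simps[simp]:
  "verts (del_vertex G v) = verts G - {v}"
  "edges (del_vertex G v) = {e \<in> edges G. v \<notin> ends G e}"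
  "ends (del_vertex G v) = ends G"
  by (simp_all add: del_vertex_def)

lemma del_vertex_sign[simp]: "sign (del_vertex G v) = sign G"
  by (simp add: del_vertex_def)

lemma del_edge_simps[simp]:
  "verts (del_edge G e) = verts G"
  "edges (del_edge G e) = edges G - {e}"
  "ends (del_edge G e) = ends G"
  by (simp_all add: del_edge_def)

lemma del_edge_sign[simp]: "sign (del_edge G e) = sign G"
  by (simp add: del_edge_def)

lemma contract_simps[simp]:
  "verts (contract G e u w) = verts G - {w}"
  "edges (contract G e u w) = edges G - {e}"
  "ends (contract G e u w) = (\<lambda>f. (\<lambda>x. if x = w then u else x) ` ends G f)"
  by (simp_all add: contract_def)

lemma contract_sign[simp]: "sign (contract G e u w) = sign G"
  by (simp add: contract_def)

lemma switch_simps[simp]: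
  "verts (switch G v) = verts G"
  "edges (switch G v) = edges G"
  "ends (switch G v) = ends G"
  "sign (switch G v) = (\<lambda>f. if v \<in> ends G f \<and> \<not> is_loop G f then \<not> sign G f else sign G f)"
  by (simp_all add: switch_def)

lemma forget_del_vertex: "forget (del_vertex S v) = del_vertex (forget S) v"
  by (simp add: forget_def del_vertex_def)
lemma forget_del_edge: "forget (del_edge S v) = del_edge (forget S) v"
  by (simp add: forget_def del_edge_def)
lemma forget_contract: "forget (contract S e u w) = contract (forget S) e u w"
  by (simp add: forget_def contract_def)
lemma forget_switch: "forget (switch S v) = forget S"
  by (simp add: forget_def switch_def)

lemma sminor_step_forget:
  assumes "sminor_step T S"
  shows "minor_step\<^sup>*\<^sup>* (forget T) (forget S)"
  using assms
proof cases
  case (1 v) then show ?thesis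
    by (metis forget_del_vertex forget_simps(1) minor_step.intros(1) r_into_rtranclp)
next
  case (2 e) then show ?thesis
    by (metis forget_del_edge forget_simps(2) minor_step.intros(2) r_into_rtranclp)
next
  case (3 e u w) then show ?thesis
    by (metis forget_contract forget_simps minor_step.intros(3) r_into_rtranclp)
next
  case (4 v) then show ?thesis by (simp add: forget_switch)
qed

lemma sminor_forget: "is_sminor T S \<Longrightarrow> is_minor (forget T) (forget S)"
  unfolding is_sminor_def is_minor_def
proof (induction rule: converse_rtranclp_induct)
  case base then show ?case by simp
next
  case (step y z)
  then show ?case using sminor_step_forget by (metis rtranclp_trans)
qed

lemma is_sminor_refl[simp]: "is_sminor S S" by (simp add: is_sminor_def)
lemma is_sminor_trans: "is_sminor A B \<Longrightarrow> is_sminor B C \<Longrightarrow> is_sminor A C"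
  unfolding is_sminor_def by (rule rtranclp_trans)
lemma is_sminor_step: "sminor_step A B \<Longrightarrow> is_sminor B C \<Longrightarrow> is_sminor A C"
  unfolding is_sminor_def by (rule converse_rtranclp_into_rtranclp)

lemma is_K_forget[simp]: "is_K (forget T) k = is_K T k"
  by (simp add: is_K_def wf_graph_def loopless_def is_loop_def)

lemma colorable_forget[simp]: "colorable (forget T) k = colorable T k"
  by (simp add: colorable_def)

lemma wf_del_vertex: "wf_graph G \<Longrightarrow> wf_graph (del_vertex G v)"
  unfolding wf_graph_def by auto

lemma wf_del_edge: "wf_graph G \<Longrightarrow> wf_graph (del_edge G v)"
  unfolding wf_graph_def by auto

lemma wf_switch: "wf_graph G \<Longrightarrow> wf_graph (switch G v)"
  unfolding wf_graph_def by auto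

lemma card_12_image:
  assumes "card A \<in> {1,2}" shows "card (f ` A) \<in> {1,2}"
proof -
  have fin: "finite A" "A \<noteq> {}" using assms by (auto intro: card_ge_0_finite)
  then have "card (f ` A) \<ge> 1" by (simp add: Suc_leI card_gt_0_iff)
  moreover have "card (f ` A) \<le> card A" using fin card_image_le by blast
  ultimately show ?thesis using assms by auto
qed

lemma wf_contract:
  assumes "wf_graph G" "e \<in> edges G" "ends G e = {u, w}" "u \<noteq> w"
  shows "wf_graph (contract G e u w)"
proof -
  have u: "u \<in> verts G" using assms unfolding wf_graph_def by auto
  let ?g = "\<lambda>x. if x = w then u else x"
  have 1: "card (?g ` ends G f) \<in> {1,2}" if "f \<in> edges G" for f
    using card_12_image[of "ends G f" ?g] assms(1) that unfolding wf_graph_def by blast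
  have 2: "?g ` ends G f \<subseteq> verts G - {w}" if "f \<in> edges G" for f
    using assms(1) that u assms(4) unfolding wf_graph_def by auto
  show ?thesis using assms(1) 1 2 unfolding wf_graph_def
    by (simp del: insert_iff)
qed

lemma wf_card_ends: "wf_graph G \<Longrightarrow> e \<in> edges G \<Longrightarrow> card (ends G e) \<in> {1,2}"
  unfolding wf_graph_def by auto

lemma wf_ends_sub: "wf_graph G \<Longrightarrow> e \<in> edges G \<Longrightarrow> ends G e \<subseteq> verts G"
  unfolding wf_graph_def by auto

lemma wf_ends_ne: "wf_graph G \<Longrightarrow> e \<in> edges G \<Longrightarrow> ends G e \<noteq> {}"
  unfolding wf_graph_def by auto

lemma card_12_cases:
  assumes "card A \<in> {1,2}"
  obtains a b where "A = {a, b}"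
  using assms by (auto simp: card_Suc_eq numeral_2_eq_2)

lemma wf_ends_pair:
  assumes "wf_graph G" "e \<in> edges G"
  obtains a b where "ends G e = {a, b}"
  using wf_card_ends[OF assms] card_12_cases by blast



definition adjF :: "('v,'e,'x) mgraph_scheme \<Rightarrow> ('e \<Rightarrow> bool) \<Rightarrow> 'v \<Rightarrow> 'v \<Rightarrow> bool" where
  "adjF G F x y \<longleftrightarrow> x \<noteq> y \<and> (\<exists>e\<in>edges G. F e \<and> ends G e = {x, y})"

definition conn_rel :: "('v \<Rightarrow> 'v \<Rightarrow> bool) \<Rightarrow> 'v set \<Rightarrow> bool" where
  "conn_rel R X \<longleftrightarrow> (\<forall>a\<in>X. \<forall>b\<in>X. (\<lambda>x y. x \<in> X \<and> y \<in> X \<and> R x y)\<^sup>*\<^sup>* a b)"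

lemma adjF_sym: "adjF G F x y \<Longrightarrow> adjF G F y x"
  unfolding adjF_def by (auto simp: insert_commute)

lemma conn_rel_mono:
  assumes "conn_rel R X" "\<And>x y. x \<in> X \<Longrightarrow> y \<in> X \<Longrightarrow> R x y \<Longrightarrow> R' x y"
  shows "conn_rel R' X"
  unfolding conn_rel_def
proof (intro ballI)
  fix a b assume "a \<in> X" "b \<in> X"
  then have "(\<lambda>x y. x \<in> X \<and> y \<in> X \<and> R x y)\<^sup>*\<^sup>* a b" using assms(1) unfolding conn_rel_def by blast
  then show "(\<lambda>x y. x \<in> X \<and> y \<in> X \<and> R' x y)\<^sup>*\<^sup>* a b"
    by (rule rtranclp_mono[THEN predicate2D, rotated]) (auto intro: assms(2))
qed

lemma conn_rel_single[simp]: "conn_rel R {a}"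
  unfolding conn_rel_def by auto

lemma rtranclp_restrict_mono:
  assumes "(\<lambda>x y. x \<in> X \<and> y \<in> X \<and> R x y)\<^sup>*\<^sup>* a b" "X \<subseteq> Y"
  shows "(\<lambda>x y. x \<in> Y \<and> y \<in> Y \<and> R x y)\<^sup>*\<^sup>* a b"
  using assms(1) by (rule rtranclp_mono[THEN predicate2D, rotated]) (use assms(2) in auto)

lemma rtranclp_sym_rel:
  assumes "r\<^sup>*\<^sup>* a b" "\<And>x y. r x y \<Longrightarrow> r y x"
  shows "r\<^sup>*\<^sup>* b a"
  using assms(1)
proof (induction rule: rtranclp_induct)
  case base then show ?case by simp
next
  case (step y z) then show ?case by (meson assms(2) converse_rtranclp_into_rtranclp)
qed

lemma conn_rel_union:
  assumes "conn_rel R A" "conn_rel R B" "a \<in> A" "b \<in> B" "R a b"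
    "\<And>x y. R x y \<Longrightarrow> R y x"
  shows "conn_rel R (A \<union> B)"
proof -
  let ?r = "\<lambda>x y. x \<in> A \<union> B \<and> y \<in> A \<union> B \<and> R x y"
  have sym: "?r x y \<Longrightarrow> ?r y x" for x y using assms(6) by blast
  have inA: "?r\<^sup>*\<^sup>* x y" if "x \<in> A" "y \<in> A" for x y
  proof -
    have "(\<lambda>x y. x \<in> A \<and> y \<in> A \<and> R x y)\<^sup>*\<^sup>* x y" using assms(1) that unfolding conn_rel_def by blast
    then show ?thesis by (rule rtranclp_restrict_mono) auto
  qed
  have inB: "?r\<^sup>*\<^sup>* x y" if "x \<in> B" "y \<in> B" for x y
  proof -
    have "(\<lambda>x y. x \<in> B \<and> y \<in> B \<and> R x y)\<^sup>*\<^sup>* x y" using assms(2) that unfolding conn_rel_def by blast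
    then show ?thesis by (rule rtranclp_restrict_mono) auto
  qed
  have ab: "?r\<^sup>*\<^sup>* a b" by (rule r_into_rtranclp) (use assms(3-5) in blast)
  have AB: "?r\<^sup>*\<^sup>* x y" if "x \<in> A" "y \<in> B" for x y
    using rtranclp_trans[OF rtranclp_trans[OF inA[OF that(1) assms(3)] ab] inB[OF assms(4) that(2)]] .
  show ?thesis unfolding conn_rel_def
  proof (intro ballI)
    fix x y assume "x \<in> A \<union> B" "y \<in> A \<union> B"
    then consider "x \<in> A" "y \<in> A" | "x \<in> B" "y \<in> B" | "x \<in> A" "y \<in> B" | "x \<in> B" "y \<in> A"
      by blast
    then show "?r\<^sup>*\<^sup>* x y"
    proof cases
      case 4
      have "?r\<^sup>*\<^sup>* y x" using AB 4 by blast
      then show ?thesis by (rule rtranclp_sym_rel) (rule sym)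
    next
      case 1 then show ?thesis by (rule inA)
    next
      case 2 then show ?thesis by (rule inB)
    next
      case 3 then show ?thesis by (rule AB)
    qed
  qed
qed

lemma rtranclp_map:
  assumes "r\<^sup>*\<^sup>* a b" "\<And>x y. r x y \<Longrightarrow> g x = g y \<or> r' (g x) (g y)"
  shows "r'\<^sup>*\<^sup>* (g a) (g b)"
  using assms(1)
proof (induction rule: rtranclp_induct)
  case base then show ?case by simp
next
  case (step y z) then show ?case using assms(2)[of y z] by (metis rtranclp.rtrancl_into_rtrancl)
qed

lemma conn_rel_map:
  assumes "conn_rel R X" "a \<in> X" "b \<in> X"
    "\<And>x y. x \<in> X \<Longrightarrow> y \<in> X \<Longrightarrow> R x y \<Longrightarrow> g x = g y \<or> (g x \<in> Y \<and> g y \<in> Y \<and> R' (g x) (g y))"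
  shows "(\<lambda>x y. x \<in> Y \<and> y \<in> Y \<and> R' x y)\<^sup>*\<^sup>* (g a) (g b)"
proof (rule rtranclp_map[where r = "\<lambda>x y. x \<in> X \<and> y \<in> X \<and> R x y"])
  show "(\<lambda>x y. x \<in> X \<and> y \<in> X \<and> R x y)\<^sup>*\<^sup>* a b" using assms(1-3) unfolding conn_rel_def by blast
next
  fix x y assume "x \<in> X \<and> y \<in> X \<and> R x y"
  then show "g x = g y \<or> g x \<in> Y \<and> g y \<in> Y \<and> R' (g x) (g y)" using assms(4) by blast
qed

lemma del_vertices:
  fixes S :: "('v,'e) sgraph"
  assumes "finite D" "D \<subseteq> verts S" "wf_graph S"
  shows "\<exists>T. is_sminor T S \<and> verts T = verts S - D \<and> edges T = {e \<in> edges S. ends S e \<inter> D = {}}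
    \<and> ends T = ends S \<and> sign T = sign S"
  using assms(1,2)
proof (induction D rule: finite_induct)
  case empty
  then show ?case by (intro exI[of _ S]) auto
next
  case (insert x D)
  then obtain T where T: "is_sminor T S" "verts T = verts S - D" "edges T = {e \<in> edges S. ends S e \<inter> D = {}}"
    "ends T = ends S" "sign T = sign S" by auto
  have "x \<in> verts T" using insert T by auto
  then have "sminor_step (del_vertex T x) T" by (rule sminor_step.intros)
  then have "is_sminor (del_vertex T x) S" using T(1) by (rule is_sminor_step)
  then show ?case using T by (intro exI[of _ "del_vertex T x"]) auto
qed

lemma del_edges:
  fixes S :: "('v,'e) sgraph"
  assumes "finite L" "L \<subseteq> edges S"
  shows "\<exists>T. is_sminor T S \<and> verts T = verts S \<and> edges T = edges S - L
    \<and> ends T = ends S \<and> sign T = sign S"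
  using assms
proof (induction L rule: finite_induct)
  case empty
  then show ?case by (intro exI[of _ S]) auto
next
  case (insert x L)
  then obtain T where T: "is_sminor T S" "verts T = verts S" "edges T = edges S - L"
    "ends T = ends S" "sign T = sign S" by auto
  have "x \<in> edges T" using insert T by auto
  then have "sminor_step (del_edge T x) T" by (rule sminor_step.intros)
  then have "is_sminor (del_edge T x) S" using T(1) by (rule is_sminor_step)
  then show ?case using T by (intro exI[of _ "del_edge T x"]) auto
qed

lemma switch_set:
  fixes S :: "('v,'e) sgraph"
  assumes "finite X" "X \<subseteq> verts S" "wf_graph S"
  shows "\<exists>T. is_sminor T S \<and> verts T = verts S \<and> edges T = edges S \<and> ends T = ends S
    \<and> (\<forall>e\<in>edges S. sign T e = (sign S e \<longleftrightarrow> (\<forall>a\<in>ends S e. \<forall>b\<in>ends S e. (a \<in> X) = (b \<in> X))))"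
  using assms(1,2)
proof (induction X rule: finite_induct)
  case empty
  then show ?case by (intro exI[of _ S]) auto
next
  case (insert x X)
  then obtain T where T: "is_sminor T S" "verts T = verts S" "edges T = edges S"
    "ends T = ends S" "\<forall>e\<in>edges S. sign T e = (sign S e \<longleftrightarrow> (\<forall>a\<in>ends S e. \<forall>b\<in>ends S e. (a \<in> X) = (b \<in> X)))"
  proof -
    have "X \<subseteq> verts S" using insert(4) by blast
    from insert.IH[OF this] show ?thesis using that by blast
  qed
  have "x \<in> verts T" using insert(4) T(2) by blast
  then have st: "sminor_step (switch T x) T" by (rule sminor_step.intros)
  have "sign (switch T x) e = (sign S e \<longleftrightarrow> (\<forall>a\<in>ends S e. \<forall>b\<in>ends S e. (a \<in> insert x X) = (b \<in> insert x X)))"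
    if e: "e \<in> edges S" for e
  proof -
    obtain a b where ab: "ends S e = {a, b}" using wf_ends_pair[OF assms(3) e] by blast
    have lp: "is_loop T e \<longleftrightarrow> a = b" using ab T(4) unfolding is_loop_def by (cases "a = b") auto
    have q: "(\<forall>p\<in>{a,b}. \<forall>q\<in>{a,b}. P p = P q) \<longleftrightarrow> (P a = P b)" for P :: "'v \<Rightarrow> bool" by auto
    have old: "sign T e = (sign S e \<longleftrightarrow> ((a \<in> X) = (b \<in> X)))"
    proof -
      have h: "sign T e = (sign S e \<longleftrightarrow> (\<forall>p\<in>ends S e. \<forall>q\<in>ends S e. (p \<in> X) = (q \<in> X)))"
        using T(5) e by (rule bspec)
      show ?thesis using h unfolding ab q[of "\<lambda>p. p \<in> X"] .
    qed
    have new: "sign (switch T x) e = (if x \<in> {a,b} \<and> a \<noteq> b then \<not> sign T e else sign T e)"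
      using lp T(4) ab by simp
    show ?thesis unfolding ab q[of "\<lambda>p. p \<in> insert x X"] using old new insert(2)
      by (cases "x = a"; cases "x = b"; simp)
  qed
  then have sg: "\<forall>e\<in>edges S. sign (switch T x) e = (sign S e \<longleftrightarrow> (\<forall>a\<in>ends S e. \<forall>b\<in>ends S e. (a \<in> insert x X) = (b \<in> insert x X)))"
    by blast
  have "is_sminor (switch T x) S" using st T(1) by (rule is_sminor_step)
  then show ?case using T(2-4) sg by (intro exI[of _ "switch T x"]) simp
qed



lemma is_sminor_single: "sminor_step A B \<Longrightarrow> is_sminor A B"
  unfolding is_sminor_def by (rule r_into_rtranclp)

lemma contract_base:
  fixes S :: "('v,'e) sgraph" and \<rho> :: "'v \<Rightarrow> 'v option"
  assumes wf: "wf_graph S" and dom: "\<forall>v. \<rho> v \<noteq> None \<longrightarrow> v \<in> verts S"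
    and nr: "\<forall>v\<in>verts S. \<rho> v \<noteq> None \<longrightarrow> \<rho> v = Some v"
  shows "\<exists>T. is_sminor T S \<and> verts T = {r. \<rho> r = Some r} \<and>
     edges T = {e \<in> edges S. (\<forall>a\<in>ends S e. \<rho> a \<noteq> None) \<and> card ((\<lambda>a. the (\<rho> a)) ` ends S e) = 2} \<and>
     (\<forall>e\<in>edges T. ends T e = (\<lambda>a. the (\<rho> a)) ` ends S e) \<and> sign T = sign S"
proof -
  let ?D = "{v \<in> verts S. \<rho> v = None}"
  have finD: "finite ?D" using wf unfolding wf_graph_def by auto
  obtain S1 where S1: "is_sminor S1 S" "verts S1 = verts S - ?D" "edges S1 = {e \<in> edges S. ends S e \<inter> ?D = {}}"
    "ends S1 = ends S" "sign S1 = sign S"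
    using del_vertices[OF finD _ wf] by blast
  let ?L = "{e \<in> edges S1. card (ends S e) \<noteq> 2}"
  have finL: "finite ?L" using wf S1(3) unfolding wf_graph_def by auto
  obtain T where T: "is_sminor T S1" "verts T = verts S1" "edges T = edges S1 - ?L"
    "ends T = ends S1" "sign T = sign S1"
    using del_edges[OF finL] by blast
  have img: "(\<lambda>a. the (\<rho> a)) ` ends S e = ends S e" if "e \<in> edges S" "\<forall>a\<in>ends S e. \<rho> a \<noteq> None" for e
  proof -
    have "\<forall>a\<in>ends S e. the (\<rho> a) = a" using that nr wf_ends_sub[OF wf that(1)] by fastforce
    then show ?thesis by simp
  qed
  have dome: "(ends S e \<inter> ?D = {}) \<longleftrightarrow> (\<forall>a\<in>ends S e. \<rho> a \<noteq> None)" if "e \<in> edges S" for e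
  proof -
    have "ends S e \<subseteq> verts S" using wf_ends_sub[OF wf that] .
    then show ?thesis by (simp add: subset_iff disjoint_iff) blast
  qed
  have "verts T = {r. \<rho> r = Some r}"
    using T(2) S1(2) dom nr by auto
  moreover have "edges T = {e \<in> edges S. (\<forall>a\<in>ends S e. \<rho> a \<noteq> None) \<and> card ((\<lambda>a. the (\<rho> a)) ` ends S e) = 2}"
  proof (rule set_eqI)
    fix e
    show "e \<in> edges T \<longleftrightarrow> e \<in> {e \<in> edges S. (\<forall>a\<in>ends S e. \<rho> a \<noteq> None) \<and> card ((\<lambda>a. the (\<rho> a)) ` ends S e) = 2}"
    proof (cases "e \<in> edges S \<and> (\<forall>a\<in>ends S e. \<rho> a \<noteq> None)")
      case True
      then have i: "(\<lambda>a. the (\<rho> a)) ` ends S e = ends S e" using img by blast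
      have "ends S e \<inter> ?D = {}" using True dome by blast
      then show ?thesis using T(3) S1(3) True by (auto simp add: i)
    next
      case False
      have "e \<notin> edges T"
      proof
        assume "e \<in> edges T"
        then have "e \<in> edges S" "ends S e \<inter> ?D = {}" using T(3) S1(3) by auto
        then show False using False dome by blast
      qed
      then show ?thesis using False by blast
    qed
  qed
  moreover have "\<forall>e\<in>edges T. ends T e = (\<lambda>a. the (\<rho> a)) ` ends S e"
    using calculation(2) T(4) S1(4) img by auto
  moreover have "is_sminor T S" using T(1) S1(1) by (rule is_sminor_trans)
  ultimately show ?thesis using T(5) S1(5) by (intro exI[of _ T]) simp
qed

lemma contract_all:
  fixes S :: "('v,'e) sgraph" and \<rho> :: "'v \<Rightarrow> 'v option"
  assumes "wf_graph S" "\<forall>v. \<rho> v \<noteq> None \<longrightarrow> v \<in> verts S"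
    "\<forall>v r. \<rho> v = Some r \<longrightarrow> \<rho> r = Some r"
    "\<forall>r. \<rho> r = Some r \<longrightarrow> conn_rel (adjF S (sign S)) {v. \<rho> v = Some r}"
  shows "\<exists>T. is_sminor T S \<and> verts T = {r. \<rho> r = Some r} \<and>
     edges T = {e \<in> edges S. (\<forall>a\<in>ends S e. \<rho> a \<noteq> None) \<and> card ((\<lambda>a. the (\<rho> a)) ` ends S e) = 2} \<and>
     (\<forall>e\<in>edges T. ends T e = (\<lambda>a. the (\<rho> a)) ` ends S e) \<and> sign T = sign S"
proof -
  obtain n where "card {v \<in> verts S. \<rho> v \<noteq> None \<and> \<rho> v \<noteq> Some v} = n" by blast
  then show ?thesis using assms
  proof (induction n arbitrary: S \<rho> rule: less_induct)
    case (less n S \<rho>)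
    note wf = less.prems(2) and dom = less.prems(3) and rep = less.prems(4) and cn = less.prems(5)
    let ?NR = "{v \<in> verts S. \<rho> v \<noteq> None \<and> \<rho> v \<noteq> Some v}"
    show ?case
    proof (cases "?NR = {}")
      case True
      then have "\<forall>v\<in>verts S. \<rho> v \<noteq> None \<longrightarrow> \<rho> v = Some v" by blast
      then show ?thesis using contract_base[OF wf dom] by blast
    next
      case False
      then obtain w where w: "w \<in> verts S" "\<rho> w \<noteq> None" "\<rho> w \<noteq> Some w" by blast
      then obtain r where r: "\<rho> w = Some r" "r \<noteq> w" by auto
      have rr: "\<rho> r = Some r" using rep r by blast
      let ?F = "{v. \<rho> v = Some r}"
      let ?R = "\<lambda>x y. x \<in> ?F \<and> y \<in> ?F \<and> adjF S (sign S) x y"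
      have "conn_rel (adjF S (sign S)) ?F" using cn rr by blast
      then have path: "?R\<^sup>*\<^sup>* r w" unfolding conn_rel_def using rr r by blast
      obtain y where y: "?R y w"
        using path r(2) by (metis (no_types, lifting) rtranclp.cases)
      then obtain f where f: "f \<in> edges S" "sign S f" "ends S f = {y, w}" "y \<noteq> w" "\<rho> y = Some r"
        unfolding adjF_def by blast
      define g where "g = (\<lambda>x. if x = w then y else x)"
      define S' where "S' = contract S f y w"
      define \<rho>' where "\<rho>' = \<rho>(w := None)"
      have st: "sminor_step S' S" unfolding S'_def using f by (intro sminor_step.intros(3)) auto
      have wf': "wf_graph S'" unfolding S'_def using wf_contract[OF wf f(1) f(3) f(4)] .
      have rg: "\<rho>' (g a) = \<rho> a" for a unfolding \<rho>'_def g_def using f(4,5) r(1) by auto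
      have NR': "{v \<in> verts S'. \<rho>' v \<noteq> None \<and> \<rho>' v \<noteq> Some v} = ?NR - {w}"
        unfolding S'_def \<rho>'_def by auto
      have finNR: "finite ?NR" using wf unfolding wf_graph_def by auto
      have wNR: "w \<in> ?NR" using w by blast
      have "card (?NR - {w}) < card ?NR" using finNR wNR by (rule card_Diff1_less)
      then have lt: "card (?NR - {w}) < n" using less.prems(1) by simp
      have dom': "\<forall>v. \<rho>' v \<noteq> None \<longrightarrow> v \<in> verts S'"
        unfolding S'_def \<rho>'_def using dom by auto
      have rep': "\<forall>v r'. \<rho>' v = Some r' \<longrightarrow> \<rho>' r' = Some r'"
      proof (intro allI impI)
        fix v r' assume a: "\<rho>' v = Some r'"
        then have "\<rho> v = Some r'" "v \<noteq> w" unfolding \<rho>'_def by (auto split: if_splits)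
        then have "\<rho> r' = Some r'" using rep by blast
        moreover have "r' \<noteq> w" using calculation w(3) by auto
        ultimately show "\<rho>' r' = Some r'" unfolding \<rho>'_def by auto
      qed
      have cn': "\<forall>r'. \<rho>' r' = Some r' \<longrightarrow> conn_rel (adjF S' (sign S')) {v. \<rho>' v = Some r'}"
      proof (intro allI impI)
        fix r' assume a: "\<rho>' r' = Some r'"
        then have r'w: "r' \<noteq> w" and rr': "\<rho> r' = Some r'" unfolding \<rho>'_def by (auto split: if_splits)
        let ?X = "{v. \<rho> v = Some r'}"
        let ?Y = "{v. \<rho>' v = Some r'}"
        have Y: "?Y = ?X - {w}" unfolding \<rho>'_def by auto
        have cX: "conn_rel (adjF S (sign S)) ?X" using cn rr' by blast
        show "conn_rel (adjF S' (sign S')) ?Y" unfolding conn_rel_def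
        proof (intro ballI)
          fix a b assume ab: "a \<in> ?Y" "b \<in> ?Y"
          have ga: "g a = a" "g b = b" using ab Y unfolding g_def by auto
          have "(\<lambda>x y. x \<in> ?Y \<and> y \<in> ?Y \<and> adjF S' (sign S') x y)\<^sup>*\<^sup>* (g a) (g b)"
          proof (rule conn_rel_map[OF cX, where a=a and b=b and g=g and Y="?Y" and R'="adjF S' (sign S')"])
            show "a \<in> ?X" "b \<in> ?X" using ab Y by auto
          next
            fix x x' assume xx: "x \<in> ?X" "x' \<in> ?X" "adjF S (sign S) x x'"
            have gY: "g z \<in> ?Y" if "z \<in> ?X" for z
            proof (cases "z = w")
              case True
              then have "r' = r" using that r(1) by simp
              then show ?thesis using True f(4,5) rg[of z] by (simp add: g_def \<rho>'_def)
            next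
              case False
              then show ?thesis using that by (simp add: g_def \<rho>'_def)
            qed
            show "g x = g x' \<or> g x \<in> ?Y \<and> g x' \<in> ?Y \<and> adjF S' (sign S') (g x) (g x')"
            proof (cases "g x = g x'")
              case False
              obtain f' where f': "f' \<in> edges S" "sign S f'" "ends S f' = {x, x'}"
                using xx(3) unfolding adjF_def by blast
              have "f' \<noteq> f"
              proof
                assume "f' = f"
                then have "{x, x'} = {y, w}" using f'(3) f(3) by simp
                then have "g x = y" "g x' = y" unfolding g_def by (auto simp: doubleton_eq_iff)
                then show False using False by simp
              qed
              have e1: "ends S' f' = {g x, g x'}" unfolding S'_def g_def using f'(3) by simp
              have e2: "f' \<in> edges S'" "sign S' f'" unfolding S'_def using f' \<open>f' \<noteq> f\<close> by auto
              have "adjF S' (sign S') (g x) (g x')"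
                unfolding adjF_def using False e1 e2 by blast
              then show ?thesis using gY xx by blast
            qed simp
          qed
          then show "(\<lambda>x y. x \<in> ?Y \<and> y \<in> ?Y \<and> adjF S' (sign S') x y)\<^sup>*\<^sup>* a b" using ga by simp
        qed
      qed
      obtain T where T: "is_sminor T S'" "verts T = {r. \<rho>' r = Some r}"
        "edges T = {e \<in> edges S'. (\<forall>a\<in>ends S' e. \<rho>' a \<noteq> None) \<and> card ((\<lambda>a. the (\<rho>' a)) ` ends S' e) = 2}"
        "\<forall>e\<in>edges T. ends T e = (\<lambda>a. the (\<rho>' a)) ` ends S' e" "sign T = sign S'"
      proof -
        have c: "card {v \<in> verts S'. \<rho>' v \<noteq> None \<and> \<rho>' v \<noteq> Some v} = card (?NR - {w})" using NR' by simp
        show ?thesis using less.IH[OF lt c wf' dom' rep' cn'] that by blast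
      qed
      have endsS': "ends S' e = g ` ends S e" for e unfolding S'_def g_def by simp
      have img: "(\<lambda>a. the (\<rho>' a)) ` ends S' e = (\<lambda>a. the (\<rho> a)) ` ends S e" for e
        unfolding endsS' image_image rg ..
      have dm: "(\<forall>a\<in>ends S' e. \<rho>' a \<noteq> None) = (\<forall>a\<in>ends S e. \<rho> a \<noteq> None)" for e
        unfolding endsS' using rg by auto
      have fimg: "card ((\<lambda>a. the (\<rho> a)) ` ends S f) \<noteq> 2"
        using f(3,5) r(1) by simp
      have "edges T = {e \<in> edges S. (\<forall>a\<in>ends S e. \<rho> a \<noteq> None) \<and> card ((\<lambda>a. the (\<rho> a)) ` ends S e) = 2}"
        unfolding T(3) img dm using fimg by (auto simp: S'_def)
      moreover have "verts T = {r. \<rho> r = Some r}" unfolding T(2) \<rho>'_def using w(3) by auto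
      moreover have "\<forall>e\<in>edges T. ends T e = (\<lambda>a. the (\<rho> a)) ` ends S e" using T(4) img by simp
      moreover have "sign T = sign S" using T(5) by (simp add: S'_def)
      moreover have "is_sminor T S" using T(1) is_sminor_single[OF st] by (rule is_sminor_trans)
      ultimately show ?thesis by blast
    qed
  qed
qed



definition minv :: "('v,'e) mgraph \<Rightarrow> ('v,'e) mgraph \<Rightarrow> ('v \<Rightarrow> 'v option) \<Rightarrow> bool" where
  "minv H G \<phi> \<longleftrightarrow> (\<forall>v. \<phi> v \<noteq> None \<longrightarrow> v \<in> verts G) \<and> verts H = {x. \<exists>v. \<phi> v = Some x} \<and>
     (\<forall>x\<in>verts H. \<phi> x = Some x) \<and>
     (\<forall>x\<in>verts H. conn_rel (adjF G (\<lambda>_. True)) {v. \<phi> v = Some x}) \<and> edges H \<subseteq> edges G \<and>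
     (\<forall>e\<in>edges H. (\<forall>a\<in>ends G e. \<phi> a \<noteq> None) \<and> ends H e = (\<lambda>a. the (\<phi> a)) ` ends G e)"

lemma minvD:
  assumes "minv H G \<phi>"
  shows "\<forall>v. \<phi> v \<noteq> None \<longrightarrow> v \<in> verts G" and "verts H = {x. \<exists>v. \<phi> v = Some x}"
    and "\<forall>x\<in>verts H. \<phi> x = Some x"
    and "\<forall>x\<in>verts H. conn_rel (adjF G (\<lambda>_. True)) {v. \<phi> v = Some x}" and "edges H \<subseteq> edges G"
    and "\<forall>e\<in>edges H. (\<forall>a\<in>ends G e. \<phi> a \<noteq> None) \<and> ends H e = (\<lambda>a. the (\<phi> a)) ` ends G e"
  using assms unfolding minv_def by blast+

lemma minv_base:
  assumes "wf_graph G"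
  shows "minv G G (\<lambda>v. if v \<in> verts G then Some v else None)"
proof -
  let ?\<phi> = "\<lambda>v. if v \<in> verts G then Some v else None"
  have fib: "{v. ?\<phi> v = Some x} = {x}" if "x \<in> verts G" for x using that by auto
  have img: "(\<lambda>a. the (?\<phi> a)) ` ends G e = ends G e" if "e \<in> edges G" for e
  proof -
    have "(\<lambda>a. the (?\<phi> a)) ` ends G e = (\<lambda>a. a) ` ends G e"
      by (rule image_cong) (use wf_ends_sub[OF assms that] in auto)
    then show ?thesis by simp
  qed
  have sub: "\<And>e a. e \<in> edges G \<Longrightarrow> a \<in> ends G e \<Longrightarrow> a \<in> verts G" using wf_ends_sub[OF assms] by blast
  show ?thesis unfolding minv_def
    using fib img by (auto intro: sub)
qed

lemma minv_del_vertex: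
  assumes "minv H G \<phi>" "x \<in> verts H"
  shows "minv (del_vertex H x) G (\<lambda>v. if \<phi> v = Some x then None else \<phi> v)"
proof -
  let ?\<phi> = "\<lambda>v. if \<phi> v = Some x then None else \<phi> v"
  note m = minvD[OF assms(1)]
  have fib: "{v. ?\<phi> v = Some y} = {v. \<phi> v = Some y}" if "y \<noteq> x" for y using that by auto
  have V: "verts (del_vertex H x) = {y. \<exists>v. ?\<phi> v = Some y}"
  proof -
    have "verts H - {x} = {y. \<exists>v. ?\<phi> v = Some y}"
    proof (rule set_eqI)
      fix y show "y \<in> verts H - {x} \<longleftrightarrow> y \<in> {y. \<exists>v. ?\<phi> v = Some y}"
      proof
        assume "y \<in> verts H - {x}"
        then obtain v where "\<phi> v = Some y" "y \<noteq> x" using m(2) by auto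
        then have "?\<phi> v = Some y" by simp
        then show "y \<in> {y. \<exists>v. ?\<phi> v = Some y}" by blast
      next
        assume "y \<in> {y. \<exists>v. ?\<phi> v = Some y}"
        then obtain v where "?\<phi> v = Some y" by blast
        then have "\<phi> v = Some y" "y \<noteq> x" by (auto split: if_splits)
        then show "y \<in> verts H - {x}" using m(2) by blast
      qed
    qed
    then show ?thesis by simp
  qed
  have E: "(\<forall>a\<in>ends G e. ?\<phi> a \<noteq> None) \<and> ends (del_vertex H x) e = (\<lambda>a. the (?\<phi> a)) ` ends G e"
    if e: "e \<in> edges (del_vertex H x)" for e
  proof -
    have e1: "e \<in> edges H" "x \<notin> ends H e" using e by auto
    have d: "\<forall>a\<in>ends G e. \<phi> a \<noteq> None" and en: "ends H e = (\<lambda>a. the (\<phi> a)) ` ends G e"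
      using m(5,6) e1(1) by auto
    have ne: "\<phi> a \<noteq> Some x" if "a \<in> ends G e" for a
    proof
      assume "\<phi> a = Some x"
      then have "x \<in> (\<lambda>a. the (\<phi> a)) ` ends G e" using that by force
      then show False using e1(2) en by simp
    qed
    have "(\<lambda>a. the (?\<phi> a)) ` ends G e = (\<lambda>a. the (\<phi> a)) ` ends G e"
      by (rule image_cong) (use ne in auto)
    then show ?thesis using d ne en by simp
  qed
  show ?thesis unfolding minv_def
  proof (intro conjI)
    show "\<forall>v. ?\<phi> v \<noteq> None \<longrightarrow> v \<in> verts G" using m(1) by auto
    show "verts (del_vertex H x) = {y. \<exists>v. ?\<phi> v = Some y}" by (rule V)
    show "\<forall>y\<in>verts (del_vertex H x). ?\<phi> y = Some y" using m(3) by auto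
    show "\<forall>y\<in>verts (del_vertex H x). conn_rel (adjF G (\<lambda>_. True)) {v. ?\<phi> v = Some y}"
    proof
      fix y assume "y \<in> verts (del_vertex H x)"
      then have y: "y \<in> verts H" "y \<noteq> x" by auto
      then have "conn_rel (adjF G (\<lambda>_. True)) {v. \<phi> v = Some y}" using m(4) by blast
      then show "conn_rel (adjF G (\<lambda>_. True)) {v. ?\<phi> v = Some y}" using fib[OF y(2)] by simp
    qed
    show "edges (del_vertex H x) \<subseteq> edges G" using m(5) by auto
    show "\<forall>e\<in>edges (del_vertex H x). (\<forall>a\<in>ends G e. ?\<phi> a \<noteq> None) \<and>
        ends (del_vertex H x) e = (\<lambda>a. the (?\<phi> a)) ` ends G e" using E by blast
  qed
qed

lemma minv_del_edge:
  assumes "minv H G \<phi>"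
  shows "minv (del_edge H e) G \<phi>"
proof -
  note m = minvD[OF assms]
  show ?thesis unfolding minv_def del_edge_simps
  proof (intro conjI)
    show "edges H - {e} \<subseteq> edges G" using m(5) by blast
    show "\<forall>f\<in>edges H - {e}. (\<forall>a\<in>ends G f. \<phi> a \<noteq> None) \<and> ends H f = (\<lambda>a. the (\<phi> a)) ` ends G f"
      using m(6) by blast
  qed (use m in blast)+
qed

lemma card_le2_eq:
  assumes "finite A" "card A \<le> 2" "a \<in> A" "b \<in> A" "a \<noteq> b"
  shows "A = {a, b}"
proof -
  have "{a, b} \<subseteq> A" using assms by auto
  moreover have "card {a, b} = 2" using assms(5) by simp
  ultimately have "card A \<le> card {a, b}" using assms(2) by simp
  then show ?thesis using card_seteq[OF assms(1) \<open>{a, b} \<subseteq> A\<close>] by simp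
qed

lemma minv_contract:
  assumes "minv H G \<phi>" "wf_graph G" "e \<in> edges H" "ends H e = {u, w}" "u \<noteq> w"
  shows "minv (contract H e u w) G (\<lambda>v. if \<phi> v = Some w then Some u else \<phi> v)"
proof -
  let ?\<phi> = "\<lambda>v. if \<phi> v = Some w then Some u else \<phi> v"
  let ?g = "\<lambda>x. if x = w then u else x"
  note m = minvD[OF assms(1)]
  have eG: "e \<in> edges G" and d: "\<forall>a\<in>ends G e. \<phi> a \<noteq> None" and en: "ends H e = (\<lambda>a. the (\<phi> a)) ` ends G e"
    using m(5,6) assms(3) by auto
  obtain a where a: "a \<in> ends G e" "the (\<phi> a) = u" using en assms(4) by (metis imageE insertI1)
  obtain b where b: "b \<in> ends G e" "the (\<phi> b) = w" using en assms(4) by (metis imageE insertI1 insert_commute)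
  have pa: "\<phi> a = Some u" using a d by auto
  have pb: "\<phi> b = Some w" using b d by auto
  have ab: "a \<noteq> b" using pa pb assms(5) by auto
  have eab: "ends G e = {a, b}"
  proof (rule card_le2_eq[OF _ _ a(1) b(1) ab])
    show "finite (ends G e)" "card (ends G e) \<le> 2" using wf_card_ends[OF assms(2) eG]
      by (auto intro: card_ge_0_finite)
  qed
  have uV: "u \<in> verts H" and wV: "w \<in> verts H" using m(2) pa pb by auto
  have adj: "adjF G (\<lambda>_. True) a b" unfolding adjF_def using ab eG eab by blast
  have fibu: "{v. ?\<phi> v = Some u} = {v. \<phi> v = Some u} \<union> {v. \<phi> v = Some w}" using assms(5) by auto
  have fiby: "{v. ?\<phi> v = Some y} = {v. \<phi> v = Some y}" if "y \<noteq> u" "y \<noteq> w" for y using that by auto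
  have cu: "conn_rel (adjF G (\<lambda>_. True)) {v. ?\<phi> v = Some u}"
    unfolding fibu by (rule conn_rel_union) (use m(4) uV wV pa pb adj adjF_sym in auto)
  have V: "verts (contract H e u w) = {y. \<exists>v. ?\<phi> v = Some y}"
  proof -
    have "verts H - {w} = {y. \<exists>v. ?\<phi> v = Some y}"
    proof (rule set_eqI)
      fix y show "y \<in> verts H - {w} \<longleftrightarrow> y \<in> {y. \<exists>v. ?\<phi> v = Some y}"
      proof
        assume "y \<in> verts H - {w}"
        then obtain v where v: "\<phi> v = Some y" "y \<noteq> w" using m(2) by auto
        then have "?\<phi> v = Some y" by simp
        then show "y \<in> {y. \<exists>v. ?\<phi> v = Some y}" by blast
      next
        assume "y \<in> {y. \<exists>v. ?\<phi> v = Some y}"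
        then obtain v where v: "?\<phi> v = Some y" by auto
        show "y \<in> verts H - {w}"
        proof (cases "\<phi> v = Some w")
          case True then show ?thesis using v uV assms(5) by auto
        next
          case False then show ?thesis using v m(2) by auto
        qed
      qed
    qed
    then show ?thesis by simp
  qed
  have thg: "the (?\<phi> a) = ?g (the (\<phi> a))" if "\<phi> a \<noteq> None" for a using that by auto
  have E: "(\<forall>a\<in>ends G f. ?\<phi> a \<noteq> None) \<and> ends (contract H e u w) f = (\<lambda>a. the (?\<phi> a)) ` ends G f"
    if f: "f \<in> edges (contract H e u w)" for f
  proof -
    have f1: "f \<in> edges H" using f by auto
    have df: "\<forall>a\<in>ends G f. \<phi> a \<noteq> None" and ef: "ends H f = (\<lambda>a. the (\<phi> a)) ` ends G f"
      using m(5,6) f1 by auto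
    have "(\<lambda>a. the (?\<phi> a)) ` ends G f = ?g ` ((\<lambda>a. the (\<phi> a)) ` ends G f)"
      unfolding image_image by (rule image_cong) (use thg df in auto)
    then show ?thesis using df ef by simp
  qed
  show ?thesis unfolding minv_def
  proof (intro conjI)
    show "\<forall>v. ?\<phi> v \<noteq> None \<longrightarrow> v \<in> verts G" using m(1) by auto
    show "verts (contract H e u w) = {y. \<exists>v. ?\<phi> v = Some y}" by (rule V)
    show "\<forall>y\<in>verts (contract H e u w). ?\<phi> y = Some y" using m(3) by auto
    show "\<forall>y\<in>verts (contract H e u w). conn_rel (adjF G (\<lambda>_. True)) {v. ?\<phi> v = Some y}"
    proof
      fix y assume y: "y \<in> verts (contract H e u w)"
      show "conn_rel (adjF G (\<lambda>_. True)) {v. ?\<phi> v = Some y}"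
      proof (cases "y = u")
        case True then show ?thesis using cu by simp
      next
        case False
        then show ?thesis using fiby[OF False] y m(4) by auto
      qed
    qed
    show "edges (contract H e u w) \<subseteq> edges G" using m(5) by auto
    show "\<forall>f\<in>edges (contract H e u w). (\<forall>a\<in>ends G f. ?\<phi> a \<noteq> None) \<and>
        ends (contract H e u w) f = (\<lambda>a. the (?\<phi> a)) ` ends G f" using E by blast
  qed
qed

lemma minor_minv:
  assumes "wf_graph G" "is_minor H G"
  shows "\<exists>\<phi>. minv H G \<phi>"
  using assms(2) unfolding is_minor_def
proof (induction rule: converse_rtranclp_induct)
  case base
  then show ?case using minv_base[OF assms(1)] by blast
next
  case (step y z)
  then obtain \<phi> where \<phi>: "minv z G \<phi>" by blast
  from step(1) show ?case
  proof cases
    case (1 v) then show ?thesis using minv_del_vertex[OF \<phi>] by blast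
  next
    case (2 e) then show ?thesis using minv_del_edge[OF \<phi>] by blast
  next
    case (3 e u w) then show ?thesis using minv_contract[OF \<phi> assms(1)] by blast
  qed
qed

lemma minv_K_edge:
  assumes "minv H G \<phi>" "is_K H k" "x \<in> verts H" "y \<in> verts H" "x \<noteq> y"
  shows "\<exists>e\<in>edges G. \<exists>a\<in>ends G e. \<exists>b\<in>ends G e. \<phi> a = Some x \<and> \<phi> b = Some y"
proof -
  have "card {e \<in> edges H. ends H e = {x, y}} = 1" using assms(2-5) unfolding is_K_def by blast
  then obtain e0 where e0: "{e \<in> edges H. ends H e = {x, y}} = {e0}" by (rule card_1_singletonE)
  then have e: "e0 \<in> edges H" "ends H e0 = {x, y}" by blast+
  note m = minvD[OF assms(1)]
  have eG: "e0 \<in> edges G" and d: "\<forall>a\<in>ends G e0. \<phi> a \<noteq> None" and en: "ends H e0 = (\<lambda>a. the (\<phi> a)) ` ends G e0"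
    using m(5,6) e(1) by auto
  obtain a where a: "a \<in> ends G e0" "the (\<phi> a) = x" using en e(2) by (metis imageE insertI1)
  obtain b where b: "b \<in> ends G e0" "the (\<phi> b) = y" using en e(2) by (metis imageE insertI1 insert_commute)
  have "\<phi> a = Some x" "\<phi> b = Some y" using a b d by auto
  then show ?thesis using eG a(1) b(1) by blast
qed



lemma parity_path:
  fixes f :: "nat \<Rightarrow> bool"
  shows "even (card {i. i < m \<and> f i \<noteq> f (Suc i)}) \<longleftrightarrow> (f 0 = f m)"
proof (induction m)
  case 0 then show ?case by simp
next
  case (Suc m)
  have eq: "{i. i < Suc m \<and> f i \<noteq> f (Suc i)} = {i. i < m \<and> f i \<noteq> f (Suc i)} \<union> (if f m \<noteq> f (Suc m) then {m} else {})"
    by (auto simp: less_Suc_eq)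
  have fin: "finite {i. i < m \<and> f i \<noteq> f (Suc i)}" by simp
  show ?case
  proof (cases "f m \<noteq> f (Suc m)")
    case True
    then have "card {i. i < Suc m \<and> f i \<noteq> f (Suc i)} = Suc (card {i. i < m \<and> f i \<noteq> f (Suc i)})"
      unfolding eq using fin by simp
    then show ?thesis using Suc True by auto
  next
    case False
    then have "card {i. i < Suc m \<and> f i \<noteq> f (Suc i)} = card {i. i < m \<and> f i \<noteq> f (Suc i)}"
      unfolding eq by simp
    then show ?thesis using Suc False by auto
  qed
qed

lemma parity_cycle:
  fixes f :: "nat \<Rightarrow> bool"
  assumes "0 < n"
  shows "even (card {i. i < n \<and> f i \<noteq> f (Suc i mod n)})"
proof -
  let ?g = "\<lambda>i. f (i mod n)"
  have "{i. i < n \<and> f i \<noteq> f (Suc i mod n)} = {i. i < n \<and> ?g i \<noteq> ?g (Suc i)}"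
    by auto
  moreover have "?g 0 = ?g n" by simp
  ultimately show ?thesis using parity_path[of n ?g] by simp
qed

definition seq :: "('v \<Rightarrow> bool) \<Rightarrow> 'v set \<Rightarrow> bool" where
  "seq s A \<longleftrightarrow> (\<forall>a\<in>A. \<forall>b\<in>A. s a = s b)"

lemma seq_pair[simp]: "seq s {a, b} \<longleftrightarrow> s a = s b"
  unfolding seq_def by auto

lemma sw_balanced:
  assumes "\<forall>e\<in>edges S. ends S e \<subseteq> X \<longrightarrow> (sign S e \<longleftrightarrow> seq s (ends S e))"
  shows "balanced_set S X"
  unfolding balanced_set_def
proof
  assume "\<exists>vs es. negative_cycle S vs es \<and> set vs \<subseteq> X"
  then obtain vs es where nc: "negative_cycle S vs es" and sub: "set vs \<subseteq> X" by blast
  let ?n = "length vs"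
  have cyc: "vs \<noteq> []" "length es = ?n" "set es \<subseteq> edges S"
    "\<forall>i<length es. ends S (es ! i) = {vs ! i, vs ! ((i + 1) mod ?n)}"
    and odd: "odd (length (filter (\<lambda>e. \<not> sign S e) es))"
    using nc unfolding negative_cycle_def is_cycle_def by auto
  have n0: "0 < ?n" using cyc(1) by simp
  let ?f = "\<lambda>i. s (vs ! i)"
  have key: "(\<not> sign S (es ! i)) \<longleftrightarrow> ?f i \<noteq> ?f (Suc i mod ?n)" if i: "i < ?n" for i
  proof -
    have e: "es ! i \<in> edges S" using cyc(2,3) i by (metis nth_mem subsetD)
    have en: "ends S (es ! i) = {vs ! i, vs ! (Suc i mod ?n)}" using cyc(2,4) i by simp
    have "vs ! i \<in> X" "vs ! (Suc i mod ?n) \<in> X" using sub i n0 by auto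
    then have "ends S (es ! i) \<subseteq> X" using en by simp
    then have "sign S (es ! i) \<longleftrightarrow> seq s (ends S (es ! i))" using assms e by blast
    then show ?thesis using en by simp
  qed
  have "length (filter (\<lambda>e. \<not> sign S e) es) = card {i. i < length es \<and> \<not> sign S (es ! i)}"
    by (rule length_filter_conv_card)
  also have "{i. i < length es \<and> \<not> sign S (es ! i)} = {i. i < ?n \<and> ?f i \<noteq> ?f (Suc i mod ?n)}"
    using key cyc(2) by auto
  finally have "even (length (filter (\<lambda>e. \<not> sign S e) es))" using parity_cycle[OF n0, of ?f] by simp
  then show False using odd by simp
qed



definition part_ok :: "('v,'e) sgraph \<Rightarrow> ('v \<Rightarrow> 'v) \<Rightarrow> ('v \<Rightarrow> bool) \<Rightarrow> bool" where
  "part_ok S p s \<longleftrightarrow> (\<forall>v\<in>verts S. p v \<in> verts S \<and> p (p v) = p v) \<and>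
     (\<forall>e\<in>edges S. card (p ` ends S e) = 1 \<longrightarrow> (sign S e \<longleftrightarrow> seq s (ends S e))) \<and>
     (\<forall>r\<in>p ` verts S. conn_rel (adjF S (\<lambda>_. True)) {v\<in>verts S. p v = r})"

definition part_max :: "('v,'e) sgraph \<Rightarrow> ('v \<Rightarrow> 'v) \<Rightarrow> ('v \<Rightarrow> bool) \<Rightarrow> bool" where
  "part_max S p s \<longleftrightarrow> (\<forall>e\<in>edges S. card (p ` ends S e) = 2 \<longrightarrow>
     (\<exists>f\<in>edges S. p ` ends S f = p ` ends S e \<and> (sign S f \<longleftrightarrow> seq s (ends S f))) \<and>
     (\<exists>f\<in>edges S. p ` ends S f = p ` ends S e \<and> \<not> (sign S f \<longleftrightarrow> seq s (ends S f))))"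

lemma part_init:
  assumes "wf_graph S" "\<not> neg_loop S"
  shows "part_ok S (\<lambda>v. v) (\<lambda>_. True)"
proof -
  have "\<forall>e\<in>edges S. card (ends S e) = 1 \<longrightarrow> sign S e"
    using assms(2) unfolding neg_loop_def is_loop_def by blast
  moreover have "{v \<in> verts S. v = r} = {r}" if "r \<in> verts S" for r using that by auto
  ultimately show ?thesis unfolding part_ok_def seq_def by auto
qed

lemma part_merge:
  assumes wf: "wf_graph S" and ok: "part_ok S p s" and nm: "\<not> part_max S p s"
  shows "\<exists>p' s'. part_ok S p' s' \<and> card (p' ` verts S) < card (p ` verts S)"
proof -
  have ok1: "\<And>v. v \<in> verts S \<Longrightarrow> p v \<in> verts S" "\<And>v. v \<in> verts S \<Longrightarrow> p (p v) = p v"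
    and ok2: "\<And>e. e \<in> edges S \<Longrightarrow> card (p ` ends S e) = 1 \<Longrightarrow> (sign S e \<longleftrightarrow> seq s (ends S e))"
    and ok3: "\<And>r. r \<in> p ` verts S \<Longrightarrow> conn_rel (adjF S (\<lambda>_. True)) {v\<in>verts S. p v = r}"
    using ok unfolding part_ok_def by blast+
  define kind where "kind f \<longleftrightarrow> (sign S f \<longleftrightarrow> seq s (ends S f))" for f
  obtain e where e: "e \<in> edges S" "card (p ` ends S e) = 2"
    and uni: "\<And>f. f \<in> edges S \<Longrightarrow> p ` ends S f = p ` ends S e \<Longrightarrow> kind f = kind e"
  proof -
    from nm obtain e where e: "e \<in> edges S" "card (p ` ends S e) = 2" and
      h: "\<not> (\<exists>f\<in>edges S. p ` ends S f = p ` ends S e \<and> kind f) \<or>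
          \<not> (\<exists>f\<in>edges S. p ` ends S f = p ` ends S e \<and> \<not> kind f)"
      unfolding part_max_def kind_def by blast
    have "kind f = kind e" if "f \<in> edges S" "p ` ends S f = p ` ends S e" for f
      using h that e(1) by blast
    then show ?thesis using that e by blast
  qed
  obtain a b where ab: "ends S e = {a, b}" using wf_ends_pair[OF wf e(1)] by blast
  have pab: "p a \<noteq> p b"
  proof
    assume "p a = p b"
    then have "p ` ends S e = {p a}" using ab by simp
    then show False using e(2) by simp
  qed
  have abV: "a \<in> verts S" "b \<in> verts S" using wf_ends_sub[OF wf e(1)] ab by auto
  define i where "i = p a"
  define j where "j = p b"
  have ij: "i \<noteq> j" using pab by (simp add: i_def j_def)
  have iV: "i \<in> verts S" "p i = i" using ok1 abV by (auto simp: i_def)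
  have jV: "j \<in> verts S" "p j = j" using ok1 abV by (auto simp: j_def)
  define c where "c = kind e"
  define p' where "p' v = (if p v = j then i else p v)" for v
  define s' where "s' v = (if p v = j \<and> \<not> c then \<not> s v else s v)" for v
  have A: "\<forall>v\<in>verts S. p' v \<in> verts S \<and> p' (p' v) = p' v"
  proof
    fix v assume v: "v \<in> verts S"
    show "p' v \<in> verts S \<and> p' (p' v) = p' v"
    proof (cases "p v = j")
      case True then show ?thesis using iV ij by (simp add: p'_def)
    next
      case False then show ?thesis using ok1[OF v] by (simp add: p'_def)
    qed
  qed
  have B: "\<forall>f\<in>edges S. card (p' ` ends S f) = 1 \<longrightarrow> (sign S f \<longleftrightarrow> seq s' (ends S f))"
  proof (intro ballI impI)
    fix f assume f: "f \<in> edges S" and c1: "card (p' ` ends S f) = 1"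
    obtain x y where xy: "ends S f = {x, y}" using wf_ends_pair[OF wf f] by blast
    have pxy: "p' x = p' y" using c1 xy by (auto simp: card_insert_if split: if_splits)
    show "sign S f \<longleftrightarrow> seq s' (ends S f)"
    proof (cases "p x = p y")
      case True
      then have "card (p ` ends S f) = 1" using xy by simp
      then have "sign S f \<longleftrightarrow> s x = s y" using ok2[OF f] xy by simp
      moreover have "(s' x = s' y) \<longleftrightarrow> (s x = s y)" using True by (auto simp: s'_def)
      ultimately show ?thesis using xy by simp
    next
      case False
      then have xyij: "(p x = i \<and> p y = j) \<or> (p x = j \<and> p y = i)"
        using pxy by (auto simp: p'_def split: if_splits)
      then have "p ` ends S f = p ` ends S e" using xy ab by (auto simp: i_def j_def)
      then have "kind f = c" using uni[OF f] by (simp add: c_def)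
      then have kf: "sign S f \<longleftrightarrow> ((s x = s y) \<longleftrightarrow> c)" unfolding kind_def xy by auto
      have "(s' x = s' y) \<longleftrightarrow> ((s x = s y) \<longleftrightarrow> c)" using xyij ij by (auto simp: s'_def)
      then show ?thesis using kf xy by simp
    qed
  qed
  have img: "p' ` verts S = p ` verts S - {j}"
  proof (rule set_eqI)
    fix r show "r \<in> p' ` verts S \<longleftrightarrow> r \<in> p ` verts S - {j}"
    proof
      assume "r \<in> p' ` verts S"
      then obtain v where v: "v \<in> verts S" "r = p' v" by blast
      then show "r \<in> p ` verts S - {j}" using ij abV by (auto simp: p'_def i_def)
    next
      assume "r \<in> p ` verts S - {j}"
      then obtain v where v: "v \<in> verts S" "r = p v" "p v \<noteq> j" by blast
      then have "r = p' v" by (simp add: p'_def)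
      then show "r \<in> p' ` verts S" using v(1) by blast
    qed
  qed
  have C: "\<forall>r\<in>p' ` verts S. conn_rel (adjF S (\<lambda>_. True)) {v\<in>verts S. p' v = r}"
  proof
    fix r assume r: "r \<in> p' ` verts S"
    show "conn_rel (adjF S (\<lambda>_. True)) {v\<in>verts S. p' v = r}"
    proof (cases "r = i")
      case True
      have eq: "{v\<in>verts S. p' v = r} = {v\<in>verts S. p v = i} \<union> {v\<in>verts S. p v = j}"
        using True ij by (auto simp: p'_def)
      have ci: "conn_rel (adjF S (\<lambda>_. True)) {v\<in>verts S. p v = i}" using ok3 abV by (auto simp: i_def)
      have cj: "conn_rel (adjF S (\<lambda>_. True)) {v\<in>verts S. p v = j}" using ok3 abV by (auto simp: j_def)
      have adj: "adjF S (\<lambda>_. True) a b" unfolding adjF_def using e(1) ab pab by auto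
      show ?thesis unfolding eq
        by (rule conn_rel_union[OF ci cj _ _ adj]) (use abV adjF_sym in \<open>auto simp: i_def j_def\<close>)
    next
      case False
      have rj: "r \<noteq> j" using r img by blast
      have eq: "{v\<in>verts S. p' v = r} = {v\<in>verts S. p v = r}"
        using False rj by (auto simp: p'_def)
      have "r \<in> p ` verts S" using r img by blast
      then show ?thesis unfolding eq by (rule ok3)
    qed
  qed
  have fin: "finite (p ` verts S)" using wf unfolding wf_graph_def by simp
  have "j \<in> p ` verts S" using abV by (auto simp: j_def)
  then have "card (p' ` verts S) < card (p ` verts S)" unfolding img by (rule card_Diff1_less[OF fin])
  moreover have "part_ok S p' s'" unfolding part_ok_def using A B C by blast
  ultimately show ?thesis by blast
qed

lemma part_exists:
  assumes wf: "wf_graph S" and nl: "\<not> neg_loop S"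
  shows "\<exists>p s. part_ok S p s \<and> part_max S p s"
proof -
  have "\<forall>p s. card (p ` verts S) = n \<longrightarrow> part_ok S p s \<longrightarrow> (\<exists>p s. part_ok S p s \<and> part_max S p s)" for n
  proof (induction n rule: less_induct)
    case (less n)
    show ?case
    proof (intro allI impI)
      fix p s assume c: "card (p ` verts S) = n" and ok: "part_ok S p s"
      show "\<exists>p s. part_ok S p s \<and> part_max S p s"
      proof (cases "part_max S p s")
        case True then show ?thesis using ok by blast
      next
        case False
        then obtain p' s' where "part_ok S p' s'" "card (p' ` verts S) < card (p ` verts S)"
          using part_merge[OF wf ok] by blast
        then show ?thesis using less.IH c by blast
      qed
    qed
  qed
  then show ?thesis using part_init[OF wf nl] by blast
qed



definition twosign :: "('v,'e) sgraph \<Rightarrow> bool" where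
  "twosign T \<longleftrightarrow> wf_graph T \<and> loopless T \<and>
     (\<forall>x\<in>verts T. \<forall>y\<in>verts T. x \<noteq> y \<longrightarrow>
        (\<exists>e\<in>edges T. ends T e = {x, y} \<and> sign T e) \<and> (\<exists>e\<in>edges T. ends T e = {x, y} \<and> \<not> sign T e))"

lemma pick_edges:
  fixes T :: "('v,'e) sgraph"
  assumes "\<forall>x\<in>verts T. \<forall>y\<in>verts T. x \<noteq> y \<longrightarrow> (\<exists>e\<in>edges T. ends T e = {x, y} \<and> Q e)"
  shows "\<exists>E. E \<subseteq> {e \<in> edges T. Q e} \<and>
    (\<forall>x\<in>verts T. \<forall>y\<in>verts T. x \<noteq> y \<longrightarrow> card {e \<in> E. ends T e = {x, y}} = 1)"
proof -
  define pk where "pk X = (SOME e. e \<in> edges T \<and> ends T e = X \<and> Q e)" for X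
  define E where "E = {e \<in> edges T. Q e \<and> pk (ends T e) = e}"
  have "card {e \<in> E. ends T e = {x, y}} = 1" if xy: "x \<in> verts T" "y \<in> verts T" "x \<noteq> y" for x y
  proof -
    have ex: "\<exists>e. e \<in> edges T \<and> ends T e = {x, y} \<and> Q e" using assms xy by blast
    have p: "pk {x, y} \<in> edges T \<and> ends T (pk {x, y}) = {x, y} \<and> Q (pk {x, y})"
      unfolding pk_def by (rule someI_ex[OF ex])
    have "{e \<in> E. ends T e = {x, y}} = {pk {x, y}}"
    proof (rule set_eqI)
      fix e show "e \<in> {e \<in> E. ends T e = {x, y}} \<longleftrightarrow> e \<in> {pk {x, y}}"
      proof
        assume "e \<in> {e \<in> E. ends T e = {x, y}}"
        then have "pk (ends T e) = e" "ends T e = {x, y}" unfolding E_def by auto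
        then show "e \<in> {pk {x, y}}" by simp
      next
        assume "e \<in> {pk {x, y}}"
        then have "e = pk {x, y}" by simp
        then show "e \<in> {e \<in> E. ends T e = {x, y}}" using p unfolding E_def by simp
      qed
    qed
    then show ?thesis by simp
  qed
  moreover have "E \<subseteq> {e \<in> edges T. Q e}" unfolding E_def by blast
  ultimately show ?thesis by blast
qed

lemma wf_sub_edges:
  assumes "wf_graph T" "verts T' = verts T" "edges T' \<subseteq> edges T" "ends T' = ends T"
  shows "wf_graph T'"
  using assms unfolding wf_graph_def by (auto intro: finite_subset)

lemma loopless_sub_edges:
  assumes "loopless T" "edges T' \<subseteq> edges T" "ends T' = ends T"
  shows "loopless T'"
  using assms unfolding loopless_def is_loop_def by auto

lemma sel_keep:
  fixes T :: "('v,'e) sgraph"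
  assumes "wf_graph T" "E \<subseteq> edges T"
  shows "\<exists>T'. is_sminor T' T \<and> verts T' = verts T \<and> edges T' = E \<and> ends T' = ends T \<and> sign T' = sign T"
proof -
  have fin: "finite (edges T - E)" using assms(1) unfolding wf_graph_def by simp
  obtain T' where T': "is_sminor T' T" "verts T' = verts T" "edges T' = edges T - (edges T - E)"
    "ends T' = ends T" "sign T' = sign T" using del_edges[OF fin] by blast
  have "edges T - (edges T - E) = E" using assms(2) by blast
  then show ?thesis using T' by auto
qed

lemma sel_tilde:
  fixes T :: "('v,'e) sgraph"
  assumes "twosign T"
  shows "\<exists>T'. is_sminor T' T \<and> is_tildeK T' (card (verts T))"
proof -
  have wf: "wf_graph T" and ll: "loopless T" using assms unfolding twosign_def by blast+
  have h1: "\<forall>x\<in>verts T. \<forall>y\<in>verts T. x \<noteq> y \<longrightarrow> (\<exists>e\<in>edges T. ends T e = {x, y} \<and> sign T e)"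
    and h2: "\<forall>x\<in>verts T. \<forall>y\<in>verts T. x \<noteq> y \<longrightarrow> (\<exists>e\<in>edges T. ends T e = {x, y} \<and> \<not> sign T e)"
    using assms unfolding twosign_def by blast+
  obtain E1 where E1: "E1 \<subseteq> {e \<in> edges T. sign T e}"
    "\<forall>x\<in>verts T. \<forall>y\<in>verts T. x \<noteq> y \<longrightarrow> card {e \<in> E1. ends T e = {x, y}} = 1"
    using pick_edges[OF h1] by blast
  obtain E2 where E2: "E2 \<subseteq> {e \<in> edges T. \<not> sign T e}"
    "\<forall>x\<in>verts T. \<forall>y\<in>verts T. x \<noteq> y \<longrightarrow> card {e \<in> E2. ends T e = {x, y}} = 1"
    using pick_edges[OF h2] by blast
  have sub: "E1 \<union> E2 \<subseteq> edges T" using E1(1) E2(1) by blast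
  obtain T' where T': "is_sminor T' T" "verts T' = verts T" "edges T' = E1 \<union> E2" "ends T' = ends T" "sign T' = sign T"
    using sel_keep[OF wf sub] by blast
  have "wf_graph T'" using wf_sub_edges[OF wf T'(2) _ T'(4)] T'(3) sub by blast
  moreover have "loopless T'" using loopless_sub_edges[OF ll _ T'(4)] T'(3) sub by blast
  moreover have "card {e \<in> edges T'. ends T' e = {x, y} \<and> sign T' e} = 1 \<and>
        card {e \<in> edges T'. ends T' e = {x, y} \<and> \<not> sign T' e} = 1"
    if "x \<in> verts T'" "y \<in> verts T'" "x \<noteq> y" for x y
  proof -
    have "{e \<in> edges T'. ends T' e = {x, y} \<and> sign T' e} = {e \<in> E1. ends T e = {x, y}}"
      using T'(3-5) E1(1) E2(1) by auto
    moreover have "{e \<in> edges T'. ends T' e = {x, y} \<and> \<not> sign T' e} = {e \<in> E2. ends T e = {x, y}}"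
      using T'(3-5) E1(1) E2(1) by auto
    ultimately show ?thesis using E1(2) E2(2) that T'(2) by simp
  qed
  ultimately have "is_tildeK T' (card (verts T))" unfolding is_tildeK_def
    apply (intro conjI ballI impI)
        apply assumption
       apply assumption
      apply (simp add: T'(2))
    by blast+
  then show ?thesis using T'(1) by blast
qed

lemma sel_neg:
  fixes T :: "('v,'e) sgraph"
  assumes "twosign T"
  shows "\<exists>T'. is_sminor T' T \<and> is_negK T' (card (verts T))"
proof -
  have wf: "wf_graph T" and ll: "loopless T" using assms unfolding twosign_def by blast+
  have h2: "\<forall>x\<in>verts T. \<forall>y\<in>verts T. x \<noteq> y \<longrightarrow> (\<exists>e\<in>edges T. ends T e = {x, y} \<and> \<not> sign T e)"
    using assms unfolding twosign_def by blast+
  obtain E2 where E2: "E2 \<subseteq> {e \<in> edges T. \<not> sign T e}"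
    "\<forall>x\<in>verts T. \<forall>y\<in>verts T. x \<noteq> y \<longrightarrow> card {e \<in> E2. ends T e = {x, y}} = 1"
    using pick_edges[OF h2] by blast
  have sub: "E2 \<subseteq> edges T" using E2(1) by blast
  obtain T' where T': "is_sminor T' T" "verts T' = verts T" "edges T' = E2" "ends T' = ends T" "sign T' = sign T"
    using sel_keep[OF wf sub] by blast
  have "wf_graph T'" using wf_sub_edges[OF wf T'(2) _ T'(4)] T'(3) sub by blast
  moreover have "loopless T'" using loopless_sub_edges[OF ll _ T'(4)] T'(3) sub by blast
  moreover have "card {e \<in> edges T'. ends T' e = {x, y}} = 1"
    if "x \<in> verts T'" "y \<in> verts T'" "x \<noteq> y" for x y
    using E2(2) that T'(2-4) by simp
  moreover have "\<forall>e\<in>edges T'. \<not> sign T' e" using T'(3,5) E2(1) by auto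
  ultimately have "is_negK T' (card (verts T))" unfolding is_negK_def is_K_def
    apply (intro conjI ballI impI)
        apply assumption
       apply assumption
      apply (simp add: T'(2))
    by blast+
  then show ?thesis using T'(1) by blast
qed

lemma sel_pos:
  fixes T :: "('v,'e) sgraph"
  assumes wf: "wf_graph T" and ll: "loopless T"
    and h: "\<forall>x\<in>verts T. \<forall>y\<in>verts T. x \<noteq> y \<longrightarrow> (\<exists>e\<in>edges T. ends T e = {x, y} \<and> True)"
  shows "\<exists>T'. is_sminor T' T \<and> is_K T' (card (verts T))"
proof -
  obtain E2 where E2: "E2 \<subseteq> {e \<in> edges T. True}"
    "\<forall>x\<in>verts T. \<forall>y\<in>verts T. x \<noteq> y \<longrightarrow> card {e \<in> E2. ends T e = {x, y}} = 1"
    using pick_edges[OF h] by blast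
  have sub: "E2 \<subseteq> edges T" using E2(1) by blast
  obtain T' where T': "is_sminor T' T" "verts T' = verts T" "edges T' = E2" "ends T' = ends T" "sign T' = sign T"
    using sel_keep[OF wf sub] by blast
  have "wf_graph T'" using wf_sub_edges[OF wf T'(2) _ T'(4)] T'(3) sub by blast
  moreover have "loopless T'" using loopless_sub_edges[OF ll _ T'(4)] T'(3) sub by blast
  moreover have "card {e \<in> edges T'. ends T' e = {x, y}} = 1"
    if "x \<in> verts T'" "y \<in> verts T'" "x \<noteq> y" for x y
    using E2(2) that T'(2-4) by simp
  ultimately have "is_K T' (card (verts T))" unfolding is_K_def
    apply (intro conjI ballI impI)
        apply assumption
       apply assumption
      apply (simp add: T'(2))
    by blast+
  then show ?thesis using T'(1) by blast
qed



lemma wf_forget[simp]: "wf_graph (forget S) = wf_graph S"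
  unfolding wf_graph_def by simp

lemma loopless_forget[simp]: "loopless (forget S) = loopless S"
  unfolding loopless_def is_loop_def by simp

lemma stage1:
  fixes S :: "('v,'e) sgraph"
  assumes wf: "wf_graph S" and ok: "part_ok S p s" and mx: "part_max S p s"
  shows "\<exists>S1. is_sminor S1 S \<and> verts S1 = p ` verts S \<and> edges S1 = {e\<in>edges S. card (p ` ends S e) = 2} \<and>
    (\<forall>e\<in>edges S1. ends S1 e = p ` ends S e) \<and> wf_graph S1 \<and> loopless S1 \<and>
    (\<forall>e\<in>edges S1. (\<exists>f\<in>edges S1. ends S1 f = ends S1 e \<and> sign S1 f) \<and>
                    (\<exists>f\<in>edges S1. ends S1 f = ends S1 e \<and> \<not> sign S1 f))"
proof -
  have ok1: "\<And>v. v \<in> verts S \<Longrightarrow> p v \<in> verts S" "\<And>v. v \<in> verts S \<Longrightarrow> p (p v) = p v"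
    and ok2: "\<And>e. e \<in> edges S \<Longrightarrow> card (p ` ends S e) = 1 \<Longrightarrow> (sign S e \<longleftrightarrow> seq s (ends S e))"
    and ok3: "\<And>r. r \<in> p ` verts S \<Longrightarrow> conn_rel (adjF S (\<lambda>_. True)) {v\<in>verts S. p v = r}"
    using ok unfolding part_ok_def by blast+
  define X where "X = {v\<in>verts S. s v}"
  have finX: "finite X" using wf unfolding wf_graph_def X_def by simp
  obtain Ss where Ss: "is_sminor Ss S" "verts Ss = verts S" "edges Ss = edges S" "ends Ss = ends S"
    "\<forall>e\<in>edges S. sign Ss e = (sign S e \<longleftrightarrow> (\<forall>a\<in>ends S e. \<forall>b\<in>ends S e. (a \<in> X) = (b \<in> X)))"
    using switch_set[OF finX _ wf] unfolding X_def by blast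
  have sgn: "sign Ss e = (sign S e \<longleftrightarrow> seq s (ends S e))" if e: "e \<in> edges S" for e
  proof -
    have "\<forall>a\<in>ends S e. (a \<in> X) = s a" using wf_ends_sub[OF wf e] unfolding X_def by blast
    then have "(\<forall>a\<in>ends S e. \<forall>b\<in>ends S e. (a \<in> X) = (b \<in> X)) = seq s (ends S e)"
      unfolding seq_def by simp
    then show ?thesis using Ss(5) e by simp
  qed
  have wfSs: "wf_graph Ss" using wf Ss(2-4) unfolding wf_graph_def by simp
  define \<rho> where "\<rho> v = (if v \<in> verts S then Some (p v) else None)" for v
  have dom: "\<forall>v. \<rho> v \<noteq> None \<longrightarrow> v \<in> verts Ss" by (simp add: \<rho>_def Ss(2))
  have rep: "\<forall>v r. \<rho> v = Some r \<longrightarrow> \<rho> r = Some r"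
  proof (intro allI impI)
    fix v r assume "\<rho> v = Some r"
    then have v: "v \<in> verts S" "r = p v" unfolding \<rho>_def by (auto split: if_splits)
    then show "\<rho> r = Some r" using ok1[OF v(1)] unfolding \<rho>_def by simp
  qed
  have fib: "{v. \<rho> v = Some r} = {v\<in>verts S. p v = r}" for r unfolding \<rho>_def by auto
  have cn: "\<forall>r. \<rho> r = Some r \<longrightarrow> conn_rel (adjF Ss (sign Ss)) {v. \<rho> v = Some r}"
  proof (intro allI impI)
    fix r assume "\<rho> r = Some r"
    then have r: "r \<in> verts S" "p r = r" unfolding \<rho>_def by (auto split: if_splits)
    then have "r \<in> p ` verts S" by (metis imageI)
    then have c: "conn_rel (adjF S (\<lambda>_. True)) {v\<in>verts S. p v = r}" by (rule ok3)
    have "conn_rel (adjF Ss (sign Ss)) {v\<in>verts S. p v = r}"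
    proof (rule conn_rel_mono[OF c])
      fix x y assume x: "x \<in> {v\<in>verts S. p v = r}" and y: "y \<in> {v\<in>verts S. p v = r}"
        and a: "adjF S (\<lambda>_. True) x y"
      then obtain f where f: "f \<in> edges S" "ends S f = {x, y}" "x \<noteq> y" unfolding adjF_def by blast
      have "p ` ends S f = {r}" using f(2) x y by auto
      then have "card (p ` ends S f) = 1" by simp
      then have "sign S f \<longleftrightarrow> seq s (ends S f)" using ok2 f(1) by blast
      then have "sign Ss f" using sgn[OF f(1)] by simp
      then show "adjF Ss (sign Ss) x y" unfolding adjF_def using f Ss(3,4) by auto
    qed
    then show "conn_rel (adjF Ss (sign Ss)) {v. \<rho> v = Some r}" unfolding fib .
  qed
  obtain S1 where S1: "is_sminor S1 Ss" "verts S1 = {r. \<rho> r = Some r}"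
    "edges S1 = {e \<in> edges Ss. (\<forall>a\<in>ends Ss e. \<rho> a \<noteq> None) \<and> card ((\<lambda>a. the (\<rho> a)) ` ends Ss e) = 2}"
    "\<forall>e\<in>edges S1. ends S1 e = (\<lambda>a. the (\<rho> a)) ` ends Ss e" "sign S1 = sign Ss"
    using contract_all[OF wfSs dom rep cn] by blast
  have img: "(\<lambda>a. the (\<rho> a)) ` ends S e = p ` ends S e" if "e \<in> edges S" for e
    by (rule image_cong) (use wf_ends_sub[OF wf that] in \<open>auto simp: \<rho>_def\<close>)
  have dm: "\<forall>a\<in>ends S e. \<rho> a \<noteq> None" if "e \<in> edges S" for e
    using wf_ends_sub[OF wf that] by (auto simp: \<rho>_def)
  have V: "verts S1 = p ` verts S"
  proof (rule set_eqI)
    fix r show "r \<in> verts S1 \<longleftrightarrow> r \<in> p ` verts S"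
    proof
      assume "r \<in> verts S1"
      then have "r \<in> verts S" "p r = r" using S1(2) unfolding \<rho>_def by (auto split: if_splits)
      then show "r \<in> p ` verts S" by (metis imageI)
    next
      assume "r \<in> p ` verts S"
      then obtain v where v: "v \<in> verts S" "r = p v" by blast
      then have "\<rho> r = Some r" using ok1[OF v(1)] unfolding \<rho>_def by simp
      then show "r \<in> verts S1" using S1(2) by simp
    qed
  qed
  have E: "edges S1 = {e\<in>edges S. card (p ` ends S e) = 2}"
  proof (rule set_eqI)
    fix e show "e \<in> edges S1 \<longleftrightarrow> e \<in> {e\<in>edges S. card (p ` ends S e) = 2}"
    proof (cases "e \<in> edges S")
      case True
      then show ?thesis unfolding S1(3) Ss(3,4) using img[OF True] dm[OF True] by simp
    next
      case False
      then show ?thesis unfolding S1(3) Ss(3,4) by simp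
    qed
  qed
  have EN: "\<forall>e\<in>edges S1. ends S1 e = p ` ends S e"
    using S1(4) img Ss(4) E by auto
  have wf1: "wf_graph S1" unfolding wf_graph_def
  proof (intro conjI ballI)
    show "finite (verts S1)" unfolding V using wf unfolding wf_graph_def by simp
    show "finite (edges S1)" unfolding E using wf unfolding wf_graph_def by simp
  next
    fix e assume e: "e \<in> edges S1"
    have eS: "e \<in> edges S" "card (p ` ends S e) = 2" using e E by auto
    show "ends S1 e \<subseteq> verts S1" unfolding V EN[rule_format, OF e] using wf_ends_sub[OF wf eS(1)] by blast
    show "card (ends S1 e) \<in> {1, 2}" unfolding EN[rule_format, OF e] using eS(2) by simp
  qed
  have ll1: "loopless S1" unfolding loopless_def is_loop_def using EN E by auto
  have both: "(\<exists>f\<in>edges S1. ends S1 f = ends S1 e \<and> sign S1 f) \<and>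
                    (\<exists>f\<in>edges S1. ends S1 f = ends S1 e \<and> \<not> sign S1 f)" if e: "e \<in> edges S1" for e
  proof -
    have eS: "e \<in> edges S" "card (p ` ends S e) = 2" using e E by auto
    obtain f1 where f1: "f1 \<in> edges S" "p ` ends S f1 = p ` ends S e" "sign S f1 \<longleftrightarrow> seq s (ends S f1)"
      using mx eS unfolding part_max_def by blast
    obtain f2 where f2: "f2 \<in> edges S" "p ` ends S f2 = p ` ends S e" "\<not> (sign S f2 \<longleftrightarrow> seq s (ends S f2))"
      using mx eS unfolding part_max_def by blast
    have f1': "f1 \<in> edges S1" "ends S1 f1 = ends S1 e" "sign S1 f1"
      using f1 eS E EN e sgn[OF f1(1)] S1(5) by auto
    have f2': "f2 \<in> edges S1" "ends S1 f2 = ends S1 e" "\<not> sign S1 f2"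
      using f2 eS E EN e sgn[OF f2(1)] S1(5) by auto
    show ?thesis using f1' f2' by blast
  qed
  have "is_sminor S1 S" using S1(1) Ss(1) by (rule is_sminor_trans)
  then show ?thesis using V E EN wf1 ll1 both by blast
qed



lemma stage2:
  fixes S1 :: "('v,'e) sgraph"
  assumes wf: "wf_graph S1"
    and both: "\<forall>e\<in>edges S1. (\<exists>f\<in>edges S1. ends S1 f = ends S1 e \<and> sign S1 f) \<and>
                    (\<exists>f\<in>edges S1. ends S1 f = ends S1 e \<and> \<not> sign S1 f)"
    and mn: "is_minor HK (forget S1)" and K: "is_K HK k"
  shows "\<exists>T. is_sminor T S1 \<and> twosign T \<and> card (verts T) = k"
proof -
  have wfF: "wf_graph (forget S1)" using wf by simp
  obtain \<phi> where \<phi>: "minv HK (forget S1) \<phi>" using minor_minv[OF wfF mn] by blast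
  note m = minvD[OF \<phi>]
  have m1: "\<forall>v. \<phi> v \<noteq> None \<longrightarrow> v \<in> verts S1" using m(1) by simp
  have m2: "\<And>v z. \<phi> v = Some z \<Longrightarrow> z \<in> verts HK" using m(2) by blast
  have m3: "\<And>z. z \<in> verts HK \<Longrightarrow> \<phi> z = Some z" using m(3) by blast
  have m4: "\<And>z. z \<in> verts HK \<Longrightarrow> conn_rel (adjF (forget S1) (\<lambda>_. True)) {v. \<phi> v = Some z}"
    using m(4) by blast
  have rep: "\<forall>v r. \<phi> v = Some r \<longrightarrow> \<phi> r = Some r" using m2 m3 by blast
  have cn: "\<forall>r. \<phi> r = Some r \<longrightarrow> conn_rel (adjF S1 (sign S1)) {v. \<phi> v = Some r}"
  proof (intro allI impI)
    fix r assume "\<phi> r = Some r"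
    then have r: "r \<in> verts HK" by (rule m2)
    show "conn_rel (adjF S1 (sign S1)) {v. \<phi> v = Some r}"
    proof (rule conn_rel_mono[OF m4[OF r]])
      fix x y assume "adjF (forget S1) (\<lambda>_. True) x y"
      then obtain e where e: "e \<in> edges S1" "ends S1 e = {x, y}" "x \<noteq> y" unfolding adjF_def by auto
      then obtain f where "f \<in> edges S1" "ends S1 f = {x, y}" "sign S1 f" using both by metis
      then show "adjF S1 (sign S1) x y" unfolding adjF_def using e(3) by blast
    qed
  qed
  obtain T where T: "is_sminor T S1" "verts T = {r. \<phi> r = Some r}"
    "edges T = {e \<in> edges S1. (\<forall>a\<in>ends S1 e. \<phi> a \<noteq> None) \<and> card ((\<lambda>a. the (\<phi> a)) ` ends S1 e) = 2}"
    "\<forall>e\<in>edges T. ends T e = (\<lambda>a. the (\<phi> a)) ` ends S1 e" "sign T = sign S1"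
    using contract_all[OF wf m1 rep cn] by blast
  have VT: "verts T = verts HK" unfolding T(2) using m2 m3 by blast
  have wfK: "wf_graph HK" and cK: "card (verts HK) = k"
    and pK: "\<And>x y. x \<in> verts HK \<Longrightarrow> y \<in> verts HK \<Longrightarrow> x \<noteq> y \<Longrightarrow> card {e \<in> edges HK. ends HK e = {x, y}} = 1"
    using K unfolding is_K_def by blast+
  have wfT: "wf_graph T" unfolding wf_graph_def
  proof (intro conjI ballI)
    show "finite (verts T)" unfolding VT using wfK unfolding wf_graph_def by simp
    have "edges T \<subseteq> edges S1" unfolding T(3) by blast
    then show "finite (edges T)" using wf unfolding wf_graph_def by (blast intro: finite_subset)
  next
    fix e assume e: "e \<in> edges T"
    have d: "\<forall>a\<in>ends S1 e. \<phi> a \<noteq> None" and c: "card ((\<lambda>a. the (\<phi> a)) ` ends S1 e) = 2"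
      using e T(3) by auto
    have "(\<lambda>a. the (\<phi> a)) ` ends S1 e \<subseteq> verts HK"
    proof
      fix z assume "z \<in> (\<lambda>a. the (\<phi> a)) ` ends S1 e"
      then obtain a where a: "a \<in> ends S1 e" "z = the (\<phi> a)" by blast
      then obtain z' where "\<phi> a = Some z'" using d by blast
      then show "z \<in> verts HK" using a(2) m2 by simp
    qed
    then show "ends T e \<subseteq> verts T" using T(4) e VT by simp
    show "card (ends T e) \<in> {1, 2}" using T(4) e c by simp
  qed
  have llT: "loopless T" unfolding loopless_def is_loop_def using T(3,4) by auto
  have pairs: "(\<exists>e\<in>edges T. ends T e = {x, y} \<and> sign T e) \<and> (\<exists>e\<in>edges T. ends T e = {x, y} \<and> \<not> sign T e)"
    if xy: "x \<in> verts T" "y \<in> verts T" "x \<noteq> y" for x y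
  proof -
    have xyK: "x \<in> verts HK" "y \<in> verts HK" using xy VT by auto
    obtain e a b where e: "e \<in> edges S1" "a \<in> ends S1 e" "b \<in> ends S1 e" "\<phi> a = Some x" "\<phi> b = Some y"
      using minv_K_edge[OF \<phi> K xyK xy(3)] by auto
    have ab: "a \<noteq> b" using e(4,5) xy(3) by auto
    have eab: "ends S1 e = {a, b}"
    proof (rule card_le2_eq[OF _ _ e(2) e(3) ab])
      show "finite (ends S1 e)" "card (ends S1 e) \<le> 2" using wf_card_ends[OF wf e(1)]
        by (auto intro: card_ge_0_finite)
    qed
    have imgab: "(\<lambda>a. the (\<phi> a)) ` {a, b} = {x, y}" using e(4,5) by simp
    have inT: "f \<in> edges T \<and> ends T f = {x, y}" if f: "f \<in> edges S1" "ends S1 f = {a, b}" for f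
    proof -
      have "f \<in> edges T" unfolding T(3) using f e(4,5) imgab xy(3) by auto
      then show ?thesis using T(4) f(2) imgab by simp
    qed
    obtain f1 where f1: "f1 \<in> edges S1" "ends S1 f1 = {a, b}" "sign S1 f1" using both e(1) eab by metis
    obtain f2 where f2: "f2 \<in> edges S1" "ends S1 f2 = {a, b}" "\<not> sign S1 f2" using both e(1) eab by metis
    show ?thesis using inT[OF f1(1,2)] inT[OF f2(1,2)] f1(3) f2(3) T(5) by auto
  qed
  have "twosign T" unfolding twosign_def using wfT llT pairs by blast
  moreover have "card (verts T) = k" using VT cK by simp
  ultimately show ?thesis using T(1) by blast
qed

definition lifts :: "('v,'e) sgraph \<Rightarrow> ('v,'e) mgraph \<Rightarrow> bool" where
  "lifts S H \<longleftrightarrow> (\<forall>k HK. is_minor HK H \<and> is_K HK k \<longrightarrow> (\<exists>T. is_sminor T S \<and> twosign T \<and> card (verts T) = k))"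

definition cpart :: "('v,'e) sgraph \<Rightarrow> ('v,'e) mgraph \<Rightarrow> ('v \<Rightarrow> 'v) \<Rightarrow> bool" where
  "cpart S H p \<longleftrightarrow> (\<forall>e\<in>edges S. card (p ` ends S e) = 2 \<longrightarrow> e \<in> edges H \<and> ends H e = p ` ends S e)"

lemma core:
  fixes S :: "('v,'e) sgraph"
  assumes wf: "wf_graph S" and nl: "\<not> neg_loop S"
  shows "\<exists>(H::('v,'e) mgraph) p s. wf_graph H \<and> loopless H \<and> part_ok S p s \<and> verts H = p ` verts S \<and>
     cpart S H p \<and> lifts S H"
proof -
  obtain p s where ps: "part_ok S p s" "part_max S p s" using part_exists[OF wf nl] by blast
  obtain S1 where S1: "is_sminor S1 S" "verts S1 = p ` verts S" "edges S1 = {e\<in>edges S. card (p ` ends S e) = 2}"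
    "\<forall>e\<in>edges S1. ends S1 e = p ` ends S e" "wf_graph S1" "loopless S1"
    "\<forall>e\<in>edges S1. (\<exists>f\<in>edges S1. ends S1 f = ends S1 e \<and> sign S1 f) \<and>
                    (\<exists>f\<in>edges S1. ends S1 f = ends S1 e \<and> \<not> sign S1 f)"
    using stage1[OF wf ps] by blast
  have A: "\<forall>e\<in>edges S. card (p ` ends S e) = 2 \<longrightarrow> e \<in> edges (forget S1) \<and> ends (forget S1) e = p ` ends S e"
    using S1(3,4) by auto
  have B: "\<forall>k HK. is_minor HK (forget S1) \<and> is_K HK k \<longrightarrow> (\<exists>T. is_sminor T S \<and> twosign T \<and> card (verts T) = k)"
  proof (intro allI impI)
    fix k HK assume h: "is_minor HK (forget S1) \<and> is_K HK k"
    obtain T where "is_sminor T S1" "twosign T" "card (verts T) = k"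
      using stage2[OF S1(5) S1(7)] h by blast
    then show "\<exists>T. is_sminor T S \<and> twosign T \<and> card (verts T) = k" using S1(1) is_sminor_trans by blast
  qed
  have "wf_graph (forget S1)" "loopless (forget S1)" "verts (forget S1) = p ` verts S"
    using S1(5,6,2) by simp_all
  moreover have "cpart S (forget S1) p" using A unfolding cpart_def .
  moreover have "lifts S (forget S1)" using B unfolding lifts_def .
  ultimately show ?thesis using ps(1) by blast
qed



lemma colorable_ex:
  assumes "wf_graph G"
  shows "colorable G (card (verts G))"
proof -
  have fin: "finite (verts G)" using assms unfolding wf_graph_def by simp
  obtain h where h: "bij_betw h (verts G) {0..<card (verts G)}" using ex_bij_betw_finite_nat[OF fin] by blast
  have lt: "\<forall>v\<in>verts G. h v < card (verts G)" using h unfolding bij_betw_def by auto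
  have inj: "inj_on h (verts G)" using h unfolding bij_betw_def by simp
  have "\<forall>e\<in>edges G. \<forall>u\<in>ends G e. \<forall>w\<in>ends G e. u \<noteq> w \<longrightarrow> h u \<noteq> h w"
  proof (intro ballI impI)
    fix e u w assume "e \<in> edges G" "u \<in> ends G e" "w \<in> ends G e" "u \<noteq> w"
    then show "h u \<noteq> h w" using inj wf_ends_sub[OF assms] unfolding inj_on_def by blast
  qed
  then show ?thesis unfolding colorable_def using lt by blast
qed

lemma chi_colorable:
  assumes "wf_graph G" shows "colorable G (chi G)"
  unfolding chi_def by (rule LeastI_ex) (use colorable_ex[OF assms] in blast)

lemma chi_le: "colorable G k \<Longrightarrow> chi G \<le> k"
  unfolding chi_def by (rule Least_le)

lemma chi_b_le: "balanced_colorable G k \<Longrightarrow> chi_b G \<le> k"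
  unfolding chi_b_def by (rule Least_le)

lemma chi_b_colorable: "balanced_colorable G k \<Longrightarrow> balanced_colorable G (chi_b G)"
  unfolding chi_b_def by (rule LeastI)

lemma minor_step_verts: "minor_step H G \<Longrightarrow> verts H \<subseteq> verts G"
  by (induction rule: minor_step.induct) auto

lemma minor_verts: "is_minor H G \<Longrightarrow> verts H \<subseteq> verts G"
  unfolding is_minor_def
proof (induction rule: converse_rtranclp_induct)
  case base then show ?case by simp
next
  case (step y z) then show ?case using minor_step_verts by blast
qed

definition Kt :: "nat \<Rightarrow> graph" where
  "Kt t = \<lparr>verts = {0..<t}, edges = {e. e < t * t \<and> e div t < e mod t}, ends = (\<lambda>e. {e div t, e mod t})\<rparr>"

lemma Kt_wf: "wf_graph (Kt t)" and Kt_loopless: "loopless (Kt t)"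
proof -
  have A: "e div t < t \<and> e mod t < t" if "e < t * t" for e
  proof -
    have "0 < t" using that by (cases t) auto
    then show ?thesis using that by (simp add: less_mult_imp_div_less)
  qed
  have B: "card {e div t, e mod t} = 2" if "e div t < e mod t" for e using that by simp
  show "wf_graph (Kt t)" unfolding wf_graph_def Kt_def using A B by auto
  show "loopless (Kt t)" unfolding loopless_def is_loop_def Kt_def using B by auto
qed

lemma Kt_chi: "t \<le> chi (Kt t)"
proof -
  have "t \<le> k" if col: "colorable (Kt t) k" for k
  proof -
    obtain c where c: "\<forall>v\<in>verts (Kt t). c v < k"
      "\<forall>e\<in>edges (Kt t). \<forall>u\<in>ends (Kt t) e. \<forall>w\<in>ends (Kt t) e. u \<noteq> w \<longrightarrow> c u \<noteq> c w"
      using col unfolding colorable_def by blast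
    have "c i \<noteq> c j" if ij: "i < j" "j < t" for i j
    proof -
      define e where "e = i * t + j"
      have "e < t * t"
      proof -
        have "e < i * t + t" unfolding e_def using ij by simp
        also have "\<dots> = (Suc i) * t" by simp
        also have "\<dots> \<le> t * t" using ij by (intro mult_le_mono1) simp
        finally show ?thesis .
      qed
      moreover have "e div t = i" "e mod t = j" unfolding e_def using ij by auto
      ultimately have "e \<in> edges (Kt t)" "ends (Kt t) e = {i, j}" unfolding Kt_def using ij by auto
      then show ?thesis using c(2) ij by auto
    qed
    then have inj: "inj_on c {0..<t}" unfolding inj_on_def by (metis atLeastLessThan_iff linorder_neqE_nat)
    have "c ` {0..<t} \<subseteq> {0..<k}" using c(1) unfolding Kt_def by auto
    then have "card (c ` {0..<t}) \<le> card {0..<k}" by (intro card_mono) auto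
    then show ?thesis using card_image[OF inj] by simp
  qed
  then show ?thesis using chi_colorable[OF Kt_wf] by blast
qed

definition tilde :: "('v, nat) mgraph \<Rightarrow> ('v, nat) sgraph" where
  "tilde G = \<lparr>verts = verts G, edges = {n. n div 2 \<in> edges G}, ends = (\<lambda>n. ends G (n div 2)), sign = even\<rparr>"

lemma tilde_simps[simp]: "verts (tilde G) = verts G" "edges (tilde G) = {n. n div 2 \<in> edges G}"
  "ends (tilde G) = (\<lambda>n. ends G (n div 2))" "sign (tilde G) = even"
  by (simp_all add: tilde_def)

lemma tilde_edges_eq: "{n::nat. n div 2 \<in> E} = (\<lambda>n. 2 * n) ` E \<union> (\<lambda>n. 2 * n + 1) ` E"
proof (rule set_eqI)
  fix n show "n \<in> {n. n div 2 \<in> E} \<longleftrightarrow> n \<in> (\<lambda>n. 2 * n) ` E \<union> (\<lambda>n. 2 * n + 1) ` E"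
  proof
    assume "n \<in> {n. n div 2 \<in> E}"
    then have d: "n div 2 \<in> E" by simp
    show "n \<in> (\<lambda>n. 2 * n) ` E \<union> (\<lambda>n. 2 * n + 1) ` E"
    proof (cases "even n")
      case True then have "n = 2 * (n div 2)" by simp
      then show ?thesis using d by blast
    next
      case False then have "n = 2 * (n div 2) + 1" by simp
      then show ?thesis using d by blast
    qed
  qed auto
qed

lemma tilde_wf: "wf_graph G \<Longrightarrow> wf_graph (tilde G)"
  unfolding wf_graph_def by (auto simp: tilde_edges_eq)

lemma tilde_noloop:
  assumes "wf_graph G" "loopless G"
  shows "\<not> neg_loop (tilde G)"
  using assms unfolding neg_loop_def loopless_def is_loop_def by auto

lemma tilde_digon:
  assumes "e \<in> edges G" "ends G e = {u, w}" "u \<noteq> w" "u \<in> X" "w \<in> X"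
  shows "\<not> balanced_set (tilde G) X"
proof -
  have cyc: "is_cycle (tilde G) [u, w] [2 * e, 2 * e + 1]"
    unfolding is_cycle_def
  proof (intro conjI allI impI)
    show "set [2 * e, 2 * e + 1] \<subseteq> edges (tilde G)" using assms(1) by simp
  next
    fix i assume "i < length [2 * e, 2 * e + 1]"
    then have "i = 0 \<or> i = 1" by auto
    then show "ends (tilde G) ([2 * e, 2 * e + 1] ! i) = {[u, w] ! i, [u, w] ! ((i + 1) mod length [u, w])}"
      using assms(2) by (auto simp: insert_commute)
  qed (use assms(3) in auto)
  have "negative_cycle (tilde G) [u, w] [2 * e, 2 * e + 1]"
    unfolding negative_cycle_def using cyc by simp
  then show ?thesis unfolding balanced_set_def using assms(4,5) by auto
qed

lemma tilde_bal_col: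
  assumes "wf_graph G" "loopless G" "balanced_colorable (tilde G) k"
  shows "colorable G k"
proof -
  obtain c where c: "\<forall>v\<in>verts G. c v < k" "\<forall>i<k. balanced_set (tilde G) {v \<in> verts G. c v = i}"
    using assms(3) unfolding balanced_colorable_def by auto
  have "c u \<noteq> c w" if e: "e \<in> edges G" "u \<in> ends G e" "w \<in> ends G e" "u \<noteq> w" for e u w
  proof
    assume cuw: "c u = c w"
    have uw: "u \<in> verts G" "w \<in> verts G" using wf_ends_sub[OF assms(1) e(1)] e by auto
    have eq: "ends G e = {u, w}"
    proof (rule card_le2_eq[OF _ _ e(2) e(3) e(4)])
      show "finite (ends G e)" "card (ends G e) \<le> 2" using wf_card_ends[OF assms(1) e(1)]
        by (auto intro: card_ge_0_finite)
    qed
    have "balanced_set (tilde G) {v \<in> verts G. c v = c u}" using c uw by blast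
    moreover have "\<not> balanced_set (tilde G) {v \<in> verts G. c v = c u}"
      by (rule tilde_digon[OF e(1) eq e(4)]) (use uw cuw in auto)
    ultimately show False by simp
  qed
  then show ?thesis unfolding colorable_def using c(1) by blast
qed

lemma tilde_bal_ex:
  assumes "wf_graph G" "loopless G"
  shows "balanced_colorable (tilde G) (card (verts G))"
proof -
  have fin: "finite (verts G)" using assms unfolding wf_graph_def by simp
  obtain h where h: "bij_betw h (verts G) {0..<card (verts G)}" using ex_bij_betw_finite_nat[OF fin] by blast
  have lt: "\<forall>v\<in>verts G. h v < card (verts G)" using h unfolding bij_betw_def by auto
  have inj: "inj_on h (verts G)" using h unfolding bij_betw_def by simp
  have "balanced_set (tilde G) {v \<in> verts G. h v = i}" for i
  proof (rule sw_balanced[where s = "\<lambda>_. True"], intro ballI impI)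
    fix n assume n: "n \<in> edges (tilde G)" and sub: "ends (tilde G) n \<subseteq> {v \<in> verts G. h v = i}"
    have e: "n div 2 \<in> edges G" using n by simp
    obtain a b where ab: "ends G (n div 2) = {a, b}" using wf_ends_pair[OF assms(1) e] by blast
    have "a \<noteq> b" using assms(2) e ab unfolding loopless_def is_loop_def by auto
    moreover have "a \<in> verts G" "b \<in> verts G" "h a = i" "h b = i" using sub ab by auto
    ultimately have False using inj unfolding inj_on_def by metis
    then show "sign (tilde G) n = seq (\<lambda>_. True) (ends (tilde G) n)" by simp
  qed
  then have "\<forall>i<card (verts G). balanced_set (tilde G) {v \<in> verts (tilde G). h v = i}" by simp
  then show ?thesis unfolding balanced_colorable_def using lt by (intro exI[of _ h]) simp
qed

lemma chi_tilde:
  assumes "wf_graph G" "loopless G"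
  shows "chi G \<le> chi_b (tilde G)"
proof -
  have "balanced_colorable (tilde G) (chi_b (tilde G))"
    by (rule chi_b_colorable[OF tilde_bal_ex[OF assms]])
  then have "colorable G (chi_b (tilde G))" by (rule tilde_bal_col[OF assms])
  then show ?thesis by (rule chi_le)
qed



definition PM :: "nat \<Rightarrow> nat \<Rightarrow> bool" where
  "PM t = (\<lambda>k. \<forall>G :: graph. wf_graph G \<and> loopless G \<and> chi G \<ge> t \<longrightarrow>
            (\<exists>H. is_minor H G \<and> is_K H k))"

definition PS :: "nat \<Rightarrow> nat \<Rightarrow> bool" where
  "PS t = (\<lambda>k. \<forall>G :: sgraph_nat. wf_graph G \<and> \<not> neg_loop G \<and> chi_b G \<ge> t \<longrightarrow>
            (\<exists>H. is_sminor H G \<and> is_tildeK H k))"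

definition PO :: "nat \<Rightarrow> nat \<Rightarrow> bool" where
  "PO t = (\<lambda>k. \<forall>G :: graph. wf_graph G \<and> loopless G \<and> chi G \<ge> t \<longrightarrow>
            (\<exists>H. is_sminor H (neg_of G) \<and> is_negK H k))"

lemma M_PM: "M t = Greatest (PM t)" unfolding M_def PM_def ..
lemma SM_PS: "SM t = Greatest (PS t)" unfolding SM_def PS_def ..
lemma OM_PO: "OM t = Greatest (PO t)" unfolding OM_def PO_def ..

lemma cres_wf:
  fixes S :: "('v,'e) sgraph" and T :: "('v,'e) sgraph"
  assumes wf: "wf_graph S" and V: "verts T = {r. \<phi> r = Some r}"
    and E: "edges T = {e \<in> edges S. (\<forall>a\<in>ends S e. \<phi> a \<noteq> None) \<and> card ((\<lambda>a. the (\<phi> a)) ` ends S e) = 2}"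
    and EN: "\<forall>e\<in>edges T. ends T e = (\<lambda>a. the (\<phi> a)) ` ends S e"
    and rep: "\<forall>v r. \<phi> v = Some r \<longrightarrow> \<phi> r = Some r" and dom: "\<forall>v. \<phi> v \<noteq> None \<longrightarrow> v \<in> verts S"
  shows "wf_graph T \<and> loopless T"
proof -
  have "wf_graph T" unfolding wf_graph_def
  proof (intro conjI ballI)
    have "verts T \<subseteq> verts S" unfolding V using dom by auto
    then show "finite (verts T)" using wf unfolding wf_graph_def by (blast intro: finite_subset)
    have "edges T \<subseteq> edges S" unfolding E by blast
    then show "finite (edges T)" using wf unfolding wf_graph_def by (blast intro: finite_subset)
  next
    fix e assume e: "e \<in> edges T"
    have d: "\<forall>a\<in>ends S e. \<phi> a \<noteq> None" and c: "card ((\<lambda>a. the (\<phi> a)) ` ends S e) = 2"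
      using e E by auto
    have "(\<lambda>a. the (\<phi> a)) ` ends S e \<subseteq> verts T"
    proof
      fix z assume "z \<in> (\<lambda>a. the (\<phi> a)) ` ends S e"
      then obtain a where a: "a \<in> ends S e" "z = the (\<phi> a)" by blast
      then obtain z' where z': "\<phi> a = Some z'" using d by blast
      then have "\<phi> z' = Some z'" using rep by blast
      then show "z \<in> verts T" using a(2) z' V by simp
    qed
    then show "ends T e \<subseteq> verts T" using EN e by simp
    show "card (ends T e) \<in> {1, 2}" using EN e c by simp
  qed
  moreover have "loopless T" unfolding loopless_def is_loop_def using E EN by auto
  ultimately show ?thesis by blast
qed

lemma cres_pair:
  fixes S :: "('v,'e) sgraph" and T :: "('v,'e) sgraph"
  assumes E: "edges T = {e \<in> edges S. (\<forall>a\<in>ends S e. \<phi> a \<noteq> None) \<and> card ((\<lambda>a. the (\<phi> a)) ` ends S e) = 2}"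
    and EN: "\<forall>e\<in>edges T. ends T e = (\<lambda>a. the (\<phi> a)) ` ends S e"
    and e: "e \<in> edges S" "ends S e = {a, b}" "\<phi> a = Some x" "\<phi> b = Some y" "x \<noteq> y"
  shows "e \<in> edges T \<and> ends T e = {x, y}"
proof -
  have img: "(\<lambda>a. the (\<phi> a)) ` ends S e = {x, y}" using e(2-4) by simp
  have "e \<in> edges T" unfolding E using e img by simp
  then show ?thesis using EN img by simp
qed

lemma minv_edge:
  assumes "minv H G \<phi>" "e0 \<in> edges H" "ends H e0 = {x, y}"
  shows "\<exists>e\<in>edges G. \<exists>a\<in>ends G e. \<exists>b\<in>ends G e. \<phi> a = Some x \<and> \<phi> b = Some y"
proof -
  note m = minvD[OF assms(1)]
  have eG: "e0 \<in> edges G" and d: "\<forall>a\<in>ends G e0. \<phi> a \<noteq> None" and en: "ends H e0 = (\<lambda>a. the (\<phi> a)) ` ends G e0"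
    using m(5,6) assms(2) by auto
  obtain a where a: "a \<in> ends G e0" "the (\<phi> a) = x" using en assms(3) by (metis imageE insertI1)
  obtain b where b: "b \<in> ends G e0" "the (\<phi> b) = y" using en assms(3) by (metis imageE insertI1 insert_commute)
  have "\<phi> a = Some x" "\<phi> b = Some y" using a b d by auto
  then show ?thesis using eG a(1) b(1) by blast
qed

lemma wf_neg_of[simp]: "wf_graph (neg_of G) = wf_graph G"
  unfolding wf_graph_def by simp

lemma PM_PS:
  assumes "PM t k" shows "PS t k"
  unfolding PS_def
proof (intro allI impI)
  fix S :: sgraph_nat assume h: "wf_graph S \<and> \<not> neg_loop S \<and> t \<le> chi_b S"
  then have wf: "wf_graph S" and nl: "\<not> neg_loop S" and tc: "t \<le> chi_b S" by auto
  obtain H p s where H: "wf_graph H" "loopless H" "part_ok S p s" "verts H = p ` verts S"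
    "cpart S H p" "lifts S H"
    using core[OF wf nl] by blast
  have ok2: "\<And>e. e \<in> edges S \<Longrightarrow> card (p ` ends S e) = 1 \<Longrightarrow> (sign S e \<longleftrightarrow> seq s (ends S e))"
    using H(3) unfolding part_ok_def by blast
  obtain c where c: "\<forall>v\<in>verts H. c v < chi H"
    "\<forall>e\<in>edges H. \<forall>u\<in>ends H e. \<forall>w\<in>ends H e. u \<noteq> w \<longrightarrow> c u \<noteq> c w"
    using chi_colorable[OF H(1)] unfolding colorable_def by blast
  have "balanced_colorable S (chi H)" unfolding balanced_colorable_def
  proof (intro exI[of _ "\<lambda>v. c (p v)"] conjI allI impI ballI)
    fix v assume "v \<in> verts S"
    then have "p v \<in> verts H" using H(4) by blast
    then show "c (p v) < chi H" using c(1) by blast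
  next
    fix i assume "i < chi H"
    show "balanced_set S {v \<in> verts S. c (p v) = i}"
    proof (rule sw_balanced[where s = s], intro ballI impI)
      fix e assume e: "e \<in> edges S" and sub: "ends S e \<subseteq> {v \<in> verts S. c (p v) = i}"
      obtain a b where ab: "ends S e = {a, b}" using wf_ends_pair[OF wf e] by blast
      have ci: "c (p a) = i" "c (p b) = i" using sub ab by auto
      have "p a = p b"
      proof (rule ccontr)
        assume ne: "p a \<noteq> p b"
        then have "card (p ` ends S e) = 2" using ab by simp
        then have "e \<in> edges H" "ends H e = {p a, p b}" using H(5) e ab unfolding cpart_def by auto
        then have "c (p a) \<noteq> c (p b)" using c(2) ne by blast
        then show False using ci by simp
      qed
      then have "card (p ` ends S e) = 1" using ab by simp
      then show "sign S e = seq s (ends S e)" using ok2[OF e] by simp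
    qed
  qed
  then have "chi_b S \<le> chi H" by (rule chi_b_le)
  then have "t \<le> chi H" using tc by simp
  then obtain HK where HK: "is_minor HK H" "is_K HK k" using assms H(1,2) unfolding PM_def by blast
  obtain T where T: "is_sminor T S" "twosign T" "card (verts T) = k" using H(6) HK unfolding lifts_def by blast
  obtain T' where "is_sminor T' T" "is_tildeK T' (card (verts T))" using sel_tilde[OF T(2)] by blast
  then show "\<exists>H. is_sminor H S \<and> is_tildeK H k" using T(1,3) is_sminor_trans by blast
qed

lemma PM_PO:
  assumes "PM t k" shows "PO (2 * t) k"
  unfolding PO_def
proof (intro allI impI)
  fix G :: graph assume h: "wf_graph G \<and> loopless G \<and> 2 * t \<le> chi G"
  then have wfG: "wf_graph G" and llG: "loopless G" and tc: "2 * t \<le> chi G" by auto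
  let ?S = "neg_of G"
  have wf: "wf_graph ?S" using wfG by simp
  have nl: "\<not> neg_loop ?S" using llG unfolding neg_loop_def loopless_def is_loop_def by simp
  obtain H p s where H: "wf_graph H" "loopless H" "part_ok ?S p s" "verts H = p ` verts ?S"
    "cpart ?S H p" "lifts ?S H"
    using core[OF wf nl] by blast
  have ok2: "\<And>e. e \<in> edges G \<Longrightarrow> card (p ` ends G e) = 1 \<Longrightarrow> (False \<longleftrightarrow> seq s (ends G e))"
    using H(3) unfolding part_ok_def by simp
  have H5: "\<And>e. e \<in> edges G \<Longrightarrow> card (p ` ends G e) = 2 \<Longrightarrow> e \<in> edges H \<and> ends H e = p ` ends G e"
    using H(5) unfolding cpart_def by simp
  obtain c where c: "\<forall>v\<in>verts H. c v < chi H"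
    "\<forall>e\<in>edges H. \<forall>u\<in>ends H e. \<forall>w\<in>ends H e. u \<noteq> w \<longrightarrow> c u \<noteq> c w"
    using chi_colorable[OF H(1)] unfolding colorable_def by blast
  define c' where "c' v = 2 * c (p v) + (if s v then 1 else 0)" for v
  have "colorable G (2 * chi H)" unfolding colorable_def
  proof (intro exI[of _ c'] conjI ballI impI)
    fix v assume "v \<in> verts G"
    then have "p v \<in> verts H" using H(4) by simp
    then have "c (p v) < chi H" using c(1) by blast
    then show "c' v < 2 * chi H" unfolding c'_def by simp
  next
    fix e u w assume e: "e \<in> edges G" and u: "u \<in> ends G e" and w: "w \<in> ends G e" and uw: "u \<noteq> w"
    have eq: "ends G e = {u, w}"
    proof (rule card_le2_eq[OF _ _ u w uw])
      show "finite (ends G e)" "card (ends G e) \<le> 2" using wf_card_ends[OF wfG e]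
        by (auto intro: card_ge_0_finite)
    qed
    show "c' u \<noteq> c' w"
    proof (cases "p u = p w")
      case True
      then have "card (p ` ends G e) = 1" using eq by simp
      then have "s u \<noteq> s w" using ok2[OF e] eq by simp
      then show ?thesis unfolding c'_def using True by auto
    next
      case False
      then have "card (p ` ends G e) = 2" using eq by simp
      then have "e \<in> edges H" "ends H e = {p u, p w}" using H5[OF e] eq by auto
      then have "c (p u) \<noteq> c (p w)" using c(2) False by blast
      then show ?thesis unfolding c'_def by (cases "s u"; cases "s w"; simp; presburger)
    qed
  qed
  then have "chi G \<le> 2 * chi H" by (rule chi_le)
  then have "t \<le> chi H" using tc by simp
  then obtain HK where HK: "is_minor HK H" "is_K HK k" using assms H(1,2) unfolding PM_def by blast
  obtain T where T: "is_sminor T ?S" "twosign T" "card (verts T) = k" using H(6) HK unfolding lifts_def by blast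
  obtain T' where "is_sminor T' T" "is_negK T' (card (verts T))" using sel_neg[OF T(2)] by blast
  then show "\<exists>H. is_sminor H ?S \<and> is_negK H k" using T(1,3) is_sminor_trans by blast
qed

lemma PO_PM:
  assumes "PO t k" shows "PM t k"
  unfolding PM_def
proof (intro allI impI)
  fix G :: graph assume h: "wf_graph G \<and> loopless G \<and> t \<le> chi G"
  then obtain T where T: "is_sminor T (neg_of G)" "is_negK T k" using assms unfolding PO_def by blast
  have "is_minor (forget T) G" using sminor_forget[OF T(1)] by simp
  moreover have "is_K (forget T) k" using T(2) unfolding is_negK_def by simp
  ultimately show "\<exists>H. is_minor H G \<and> is_K H k" by blast
qed



lemma PS_PM:
  assumes "PS t k" shows "PM t k"
  unfolding PM_def
proof (intro allI impI)
  fix G :: graph assume h: "wf_graph G \<and> loopless G \<and> t \<le> chi G"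
  then have wfG: "wf_graph G" and llG: "loopless G" and tc: "t \<le> chi G" by auto
  have "t \<le> chi_b (tilde G)" using chi_tilde[OF wfG llG] tc by simp
  then obtain T where T: "is_sminor T (tilde G)" "is_tildeK T k"
    using assms tilde_wf[OF wfG] tilde_noloop[OF wfG llG] unfolding PS_def by blast
  have mn: "is_minor (forget T) (forget (tilde G))" by (rule sminor_forget[OF T(1)])
  have wfF: "wf_graph (forget (tilde G))" using tilde_wf[OF wfG] by simp
  obtain \<phi> where \<phi>: "minv (forget T) (forget (tilde G)) \<phi>" using minor_minv[OF wfF mn] by blast
  note m = minvD[OF \<phi>]
  have m1: "\<forall>v. \<phi> v \<noteq> None \<longrightarrow> v \<in> verts (pos_of G)" using m(1) by simp
  have m2: "\<And>v z. \<phi> v = Some z \<Longrightarrow> z \<in> verts T" using m(2) by auto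
  have m3: "\<And>z. z \<in> verts T \<Longrightarrow> \<phi> z = Some z" using m(3) by auto
  have m4: "\<And>z. z \<in> verts T \<Longrightarrow> conn_rel (adjF (forget (tilde G)) (\<lambda>_. True)) {v. \<phi> v = Some z}"
    using m(4) by auto
  have rep: "\<forall>v r. \<phi> v = Some r \<longrightarrow> \<phi> r = Some r" using m2 m3 by blast
  have cn: "\<forall>r. \<phi> r = Some r \<longrightarrow> conn_rel (adjF (pos_of G) (sign (pos_of G))) {v. \<phi> v = Some r}"
  proof (intro allI impI)
    fix r assume "\<phi> r = Some r"
    then have r: "r \<in> verts T" by (rule m2)
    show "conn_rel (adjF (pos_of G) (sign (pos_of G))) {v. \<phi> v = Some r}"
    proof (rule conn_rel_mono[OF m4[OF r]])
      fix x y assume "adjF (forget (tilde G)) (\<lambda>_. True) x y"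
      then obtain n where n: "n div 2 \<in> edges G" "ends G (n div 2) = {x, y}" "x \<noteq> y"
        unfolding adjF_def by auto
      then show "adjF (pos_of G) (sign (pos_of G)) x y" unfolding adjF_def by auto
    qed
  qed
  have wfP: "wf_graph (pos_of G)" using wfG unfolding wf_graph_def by simp
  obtain S2 where S2: "is_sminor S2 (pos_of G)" "verts S2 = {r. \<phi> r = Some r}"
    "edges S2 = {e \<in> edges (pos_of G). (\<forall>a\<in>ends (pos_of G) e. \<phi> a \<noteq> None) \<and> card ((\<lambda>a. the (\<phi> a)) ` ends (pos_of G) e) = 2}"
    "\<forall>e\<in>edges S2. ends S2 e = (\<lambda>a. the (\<phi> a)) ` ends (pos_of G) e" "sign S2 = sign (pos_of G)"
    using contract_all[OF wfP m1 rep cn] by blast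
  have wl: "wf_graph S2 \<and> loopless S2" by (rule cres_wf[OF wfP S2(2) S2(3) S2(4) rep m1])
  have VS: "verts S2 = verts T" unfolding S2(2) using m2 m3 by blast
  have pairs: "\<forall>x\<in>verts S2. \<forall>y\<in>verts S2. x \<noteq> y \<longrightarrow> (\<exists>e\<in>edges S2. ends S2 e = {x, y} \<and> True)"
  proof (intro ballI impI)
    fix x y assume x: "x \<in> verts S2" and y: "y \<in> verts S2" and xy: "x \<noteq> y"
    have "card {e \<in> edges T. ends T e = {x, y} \<and> sign T e} = 1"
      using T(2) x y xy VS unfolding is_tildeK_def by blast
    then obtain e0 where "{e \<in> edges T. ends T e = {x, y} \<and> sign T e} = {e0}" by (rule card_1_singletonE)
    then have e0: "e0 \<in> edges (forget T)" "ends (forget T) e0 = {x, y}" by auto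
    obtain n a b where n: "n \<in> edges (forget (tilde G))" "a \<in> ends (forget (tilde G)) n"
      "b \<in> ends (forget (tilde G)) n" "\<phi> a = Some x" "\<phi> b = Some y"
      using minv_edge[OF \<phi> e0] by blast
    have g: "n div 2 \<in> edges G" "a \<in> ends G (n div 2)" "b \<in> ends G (n div 2)" using n by auto
    have ab: "a \<noteq> b" using n(4,5) xy by auto
    have eab: "ends G (n div 2) = {a, b}"
    proof (rule card_le2_eq[OF _ _ g(2) g(3) ab])
      show "finite (ends G (n div 2))" "card (ends G (n div 2)) \<le> 2" using wf_card_ends[OF wfG g(1)]
        by (auto intro: card_ge_0_finite)
    qed
    have "n div 2 \<in> edges S2 \<and> ends S2 (n div 2) = {x, y}"
      by (rule cres_pair[OF S2(3) S2(4)]) (use g(1) eab n(4,5) xy in simp_all)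
    then show "\<exists>e\<in>edges S2. ends S2 e = {x, y} \<and> True" by blast
  qed
  obtain T' where T': "is_sminor T' S2" "is_K T' (card (verts S2))"
    using sel_pos[OF _ _ pairs] wl by blast
  have "card (verts S2) = k" using VS T(2) unfolding is_tildeK_def by simp
  then have "is_K (forget T') k" using T'(2) by simp
  moreover have "is_minor (forget T') G"
    using sminor_forget[OF is_sminor_trans[OF T'(1) S2(1)]] by simp
  ultimately show "\<exists>H. is_minor H G \<and> is_K H k" by blast
qed

lemma PO_zero: "PO t 0"
  unfolding PO_def
proof (intro allI impI)
  fix G :: graph assume h: "wf_graph G \<and> loopless G \<and> t \<le> chi G"
  then have wfG: "wf_graph G" by simp
  have wf: "wf_graph (neg_of G)" using wfG by simp
  obtain T where T: "is_sminor T (neg_of G)" "verts T = {r. (None :: nat option) = Some r}"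
    "edges T = {e \<in> edges (neg_of G). (\<forall>a\<in>ends (neg_of G) e. (None :: nat option) \<noteq> None) \<and>
        card ((\<lambda>a. the (None :: nat option)) ` ends (neg_of G) e) = 2}"
    using contract_all[OF wf, of "\<lambda>_. None"] by auto
  have V: "verts T = {}" using T(2) by simp
  have E: "edges T = {}" using T(3) wf_ends_ne[OF wfG] by auto
  have "is_negK T 0" unfolding is_negK_def is_K_def wf_graph_def loopless_def using V E by simp
  then show "\<exists>H. is_sminor H (neg_of G) \<and> is_negK H 0" using T(1) by blast
qed

lemma PM_le: assumes "PM t k" shows "k \<le> t"
proof -
  obtain H where H: "is_minor H (Kt t)" "is_K H k"
    using assms Kt_wf Kt_loopless Kt_chi unfolding PM_def by blast
  have "verts H \<subseteq> {0..<t}" using minor_verts[OF H(1)] by (simp add: Kt_def)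
  then have "card (verts H) \<le> t" using card_mono[of "{0..<t}"] by fastforce
  then show ?thesis using H(2) unfolding is_K_def by simp
qed

theorem theorem3p2:
  fixes t :: nat
  assumes "0 < t"
  shows "M t = SM t \<and> OM t \<le> M t \<and> M t \<le> OM (2 * t)"
proof (intro conjI)
  have "PM t = PS t" using PM_PS PS_PM by blast
  then show "M t = SM t" unfolding M_PM SM_PS by simp
next
  have bO: "\<And>y. PO t y \<Longrightarrow> y \<le> t" using PO_PM PM_le by blast
  have "PO t (Greatest (PO t))" by (rule GreatestI_nat[where P="PO t", OF PO_zero[of t] bO])
  then have "PM t (OM t)" unfolding OM_PO by (rule PO_PM)
  then show "OM t \<le> M t" unfolding M_PM by (rule Greatest_le_nat) (rule PM_le)
next
  have "PM t 0" by (rule PO_PM[OF PO_zero])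
  then have "PM t (Greatest (PM t))" by (rule GreatestI_nat) (rule PM_le)
  then have "PO (2 * t) (M t)" unfolding M_PM by (rule PM_PO)
  then show "M t \<le> OM (2 * t)" unfolding OM_PO by (rule Greatest_le_nat) (use PO_PM PM_le in blast)
qed


end
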